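(* Let $A\in\mathbb{R}^{d\times d}$, $B\in\mathbb{R}^{d\times p}$, and $Q,R$ symmetric positive definite of sizes $d\times d$, $p\times p$. For $U\in\mathbb{R}^{p\times d}$ with $\alpha(A+BU)<0$ define $$\mathrm{cost}(U)=\mathrm{tr}\Big(\int_0^\infty \big(e^{(A+BU)t}\big)^{\mathrm{T}}(Q+U^{\mathrm{T}}RU)e^{(A+BU)t}\,dt\Big).$$ Let $U_*$ minimize $\mathrm{cost}(U)$ (over such $U$). Then there exist constants $\epsilon_0>0$ and $C_1$ such that for every $\Delta U\in\mathbb{R}^{p\times d}$ with $\|\Delta U\|=1$ and every $\epsilon\in[0,\epsilon_0]$, $$\mathrm{cost}(U_*+\epsilon\Delta U)-\mathrm{cost}(U_* )\le C_1\epsilon^2.$$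
   Context: $\alpha(N)=\max\{\Re(\lambda):\lambda\text{ eigenvalue of }N\}$; $\|\cdot\|$ is the spectral norm. *)

theory Defs
  imports "HOL-Analysis.Analysis"
begin

primrec mat_pow :: "real^'n^'n \<Rightarrow> nat \<Rightarrow> real^'n^'n" where
  "mat_pow M 0 = mat 1"
| "mat_pow M (Suc k) = M ** mat_pow M k"

definition mexp :: "real^'n^'n \<Rightarrow> real^'n^'n" where
  "mexp M = (\<Sum>k. (1 / fact k) *\<^sub>R mat_pow M k)"

definition complexify :: "real^'n^'m \<Rightarrow> complex^'n^'m" where
  "complexify M = (\<chi> i j. complex_of_real (M $ i $ j))"

definition eigenvalues :: "real^'n^'n \<Rightarrow> complex set" where
  "eigenvalues M = {c. \<exists>v::complex^'n. v \<noteq> 0 \<and> complexify M *v v = c *s v}"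

definition spectral_abscissa :: "real^'n^'n \<Rightarrow> real" where
  "spectral_abscissa N = Max (Re ` eigenvalues N)"

definition spec_norm :: "real^'n^'m \<Rightarrow> real" where
  "spec_norm M = onorm (\<lambda>x. M *v x)"

definition sym_pos_def :: "real^'n^'n \<Rightarrow> bool" where
  "sym_pos_def M \<longleftrightarrow> transpose M = M \<and> (\<forall>x. x \<noteq> 0 \<longrightarrow> x \<bullet> (M *v x) > 0)"

definition lqr_cost :: "real^'d^'d \<Rightarrow> real^'p^'d \<Rightarrow> real^'d^'d \<Rightarrow> real^'p^'p \<Rightarrow> real^'d^'p \<Rightarrow> real" where
  "lqr_cost A B Q R U = trace (integral {0..}
      (\<lambda>t::real. transpose (mexp (t *\<^sub>R (A + B ** U))) ** (Q + transpose U ** R ** U)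
                 ** mexp (t *\<^sub>R (A + B ** U))))"

end

theory Submission
  imports Defs "HOL-Computational_Algebra.Fundamental_Theorem_Algebra"
begin


definition mu :: "real^'n^'m \<Rightarrow> real" where
  "mu A = (\<Sum>i\<in>UNIV. \<Sum>j\<in>UNIV. \<bar>A$i$j\<bar>)"

lemma mu_nonneg: "0 \<le> mu A"
  by (simp add: mu_def sum_nonneg)

lemma entry_le_mu: "\<bar>A$i$j\<bar> \<le> mu A"
proof -
  have "\<bar>A$i$j\<bar> \<le> (\<Sum>j\<in>UNIV. \<bar>A$i$j\<bar>)"
    by (rule member_le_sum) auto
  also have "\<dots> \<le> mu A" unfolding mu_def
    by (rule member_le_sum[where f="\<lambda>i. \<Sum>j\<in>UNIV. \<bar>A$i$j\<bar>"]) (auto intro: sum_nonneg)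
  finally show ?thesis .
qed

lemma norm_le_mu: "norm A \<le> mu A"
proof -
  have "norm A \<le> (\<Sum>i\<in>UNIV. norm (A$i))" unfolding norm_vec_def by (rule L2_set_le_sum) auto
  also have "\<dots> \<le> (\<Sum>i\<in>UNIV. \<Sum>j\<in>UNIV. \<bar>A$i$j\<bar>)"
    by (rule sum_mono) (simp add: norm_le_l1_cart)
  finally show ?thesis by (simp add: mu_def)
qed

lemma mu_mult: "mu ((A::real^'k^'m) ** (B::real^'n^'k)) \<le> mu A * mu B"
proof -
  have "mu (A ** B) = (\<Sum>i\<in>UNIV. \<Sum>j\<in>UNIV. \<bar>\<Sum>k\<in>UNIV. A$i$k * B$k$j\<bar>)"
    by (simp add: mu_def matrix_matrix_mult_def)
  also have "\<dots> \<le> (\<Sum>i\<in>UNIV. \<Sum>j\<in>UNIV. \<Sum>k\<in>UNIV. \<bar>A$i$k\<bar> * \<bar>B$k$j\<bar>)"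
    by (intro sum_mono order.trans[OF sum_abs]) (simp add: abs_mult)
  also have "\<dots> = (\<Sum>i\<in>UNIV. \<Sum>k\<in>UNIV. \<Sum>j\<in>UNIV. \<bar>A$i$k\<bar> * \<bar>B$k$j\<bar>)"
    by (rule sum.cong[OF refl], rule sum.swap)
  also have "\<dots> \<le> (\<Sum>i\<in>UNIV. \<Sum>k\<in>UNIV. \<bar>A$i$k\<bar> * mu B)"
  proof (intro sum_mono)
    fix i k
    have "(\<Sum>j\<in>UNIV. \<bar>A$i$k\<bar> * \<bar>B$k$j\<bar>) = \<bar>A$i$k\<bar> * (\<Sum>j\<in>UNIV. \<bar>B$k$j\<bar>)"
      by (simp add: sum_distrib_left)
    also have "\<dots> \<le> \<bar>A$i$k\<bar> * mu B" unfolding mu_def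
      by (intro mult_left_mono member_le_sum[where f="\<lambda>k. \<Sum>j\<in>UNIV. \<bar>B$k$j\<bar>"]) (auto intro: sum_nonneg)
    finally show "(\<Sum>j\<in>UNIV. \<bar>A$i$k\<bar> * \<bar>B$k$j\<bar>) \<le> \<bar>A$i$k\<bar> * mu B" .
  qed
  also have "\<dots> = mu A * mu B"
    by (simp add: mu_def sum_distrib_right)
  finally show ?thesis .
qed

lemma mu_mat1: "mu (mat 1 :: real^'n^'n) = real CARD('n)"
proof -
  have "\<And>i j. \<bar>(mat 1::real^'n^'n)$i$j\<bar> = (if j = i then 1 else 0)" by (simp add: mat_def)
  then show ?thesis by (simp add: mu_def sum.delta)
qed

lemma mat_pow_mu: "mu (mat_pow (M::real^'n^'n) k) \<le> real CARD('n) * mu M ^ k"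
proof (induction k)
  case 0 then show ?case by (simp add: mu_mat1)
next
  case (Suc k)
  have "mu (mat_pow M (Suc k)) \<le> mu M * mu (mat_pow M k)" by (simp add: mu_mult)
  also have "\<dots> \<le> mu M * (real CARD('n) * mu M ^ k)"
    by (intro mult_left_mono Suc mu_nonneg)
  finally show ?case by (simp add: algebra_simps)
qed

lemma mat_pow_commute: "mat_pow M k ** M = M ** mat_pow M k"
  by (induction k) (simp_all add: matrix_mul_assoc[symmetric])

lemma mat_pow_scaleR: "mat_pow (t *\<^sub>R M) k = t^k *\<^sub>R mat_pow M k"
  by (induction k) (simp_all add: scalar_matrix_assoc[symmetric] matrix_scalar_ac)

lemma mat_pow_transpose: "transpose (mat_pow M k) = mat_pow (transpose M) k"
  by (induction k) (simp_all add: matrix_transpose_mul mat_pow_commute)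

lemma summable_mexp: "summable (\<lambda>k. (1 / fact k) *\<^sub>R mat_pow (M::real^'n^'n) k)"
proof (rule summable_comparison_test)
  show "\<exists>N. \<forall>k\<ge>N. norm ((1 / fact k) *\<^sub>R mat_pow M k) \<le> real CARD('n) * (inverse (fact k) * mu M ^ k)"
  proof (intro exI allI impI)
    fix k :: nat
    have "norm ((1 / fact k) *\<^sub>R mat_pow M k) = norm (mat_pow M k) / fact k" by simp
    also have "\<dots> \<le> real CARD('n) * mu M ^ k / fact k"
      by (intro divide_right_mono order.trans[OF norm_le_mu mat_pow_mu]) auto
    finally show "norm ((1 / fact k) *\<^sub>R mat_pow M k) \<le> real CARD('n) * (inverse (fact k) * mu M ^ k)" by (simp add: field_simps)
  qed
  show "summable (\<lambda>k. real CARD('n) * (inverse (fact k) * mu M ^ k))"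
    by (intro summable_mult summable_exp)
qed


lemma vec_has_vector_derivative:
  fixes f :: "real \<Rightarrow> 'a::real_normed_vector^'n"
  assumes "\<And>i. ((\<lambda>t. f t $ i) has_vector_derivative f' $ i) F"
  shows "(f has_vector_derivative f') F"
proof -
  let ?L = "Lim F (\<lambda>x. x)"
  have *: "\<And>i. ((\<lambda>y. ((f y $ i - f ?L $ i) - (y - ?L) *\<^sub>R f' $ i) /\<^sub>R norm (y - ?L)) \<longlongrightarrow> 0) F"
    using assms unfolding has_vector_derivative_def has_derivative_def by blast
  have "((\<lambda>y. \<chi> i. ((f y $ i - f ?L $ i) - (y - ?L) *\<^sub>R f' $ i) /\<^sub>R norm (y - ?L)) \<longlongrightarrow> (\<chi> i. 0)) F"
    by (rule tendsto_vec_lambda) (rule *)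
  moreover have "(\<lambda>y. \<chi> i. ((f y $ i - f ?L $ i) - (y - ?L) *\<^sub>R f' $ i) /\<^sub>R norm (y - ?L))
      = (\<lambda>y. ((f y - f ?L) - (y - ?L) *\<^sub>R f') /\<^sub>R norm (y - ?L))"
    by (rule ext) (simp add: vec_eq_iff)
  ultimately have "((\<lambda>y. ((f y - f ?L) - (y - ?L) *\<^sub>R f') /\<^sub>R norm (y - ?L)) \<longlongrightarrow> 0) F"
    by (simp add: zero_vec_def)
  then show ?thesis
    unfolding has_vector_derivative_def has_derivative_def
    by (simp add: bounded_linear_scaleR_left)
qed

lemma mat_has_vector_derivative:
  fixes f :: "real \<Rightarrow> real^'n^'m"
  assumes "\<And>i j. ((\<lambda>t. f t $ i $ j) has_real_derivative f' $ i $ j) F"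
  shows "(f has_vector_derivative f') F"
  by (intro vec_has_vector_derivative) (use assms in \<open>simp add: has_real_derivative_iff_has_vector_derivative\<close>)

lemma bl_entry: "bounded_linear (\<lambda>X::real^'n^'m. X $ i $ j)"
  using bounded_linear_compose[OF bounded_linear_vec_nth bounded_linear_vec_nth] .

lemma mult_scaleR_right: "(A::real^'k^'m) ** (c *\<^sub>R B) = c *\<^sub>R (A ** (B::real^'n^'k))"
  by (simp add: matrix_scalar_ac scalar_matrix_assoc)

lemma mult_scaleR_left: "(c *\<^sub>R A) ** B = c *\<^sub>R ((A::real^'k^'m) ** (B::real^'n^'k))"
  by (simp add: scalar_matrix_assoc)

lemma matrix_add_rdist: "((A::real^'k^'m) + B) ** (C::real^'n^'k) = A ** C + B ** C"
  by (simp add: matrix_matrix_mult_def vec_eq_iff sum.distrib ring_distribs)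

lemma matrix_diff_ldist: "(A::real^'k^'m) ** ((B::real^'n^'k) - C) = A ** B - A ** C"
  by (simp add: matrix_matrix_mult_def vec_eq_iff sum_subtractf ring_distribs)

lemma matrix_diff_rdist: "((A::real^'k^'m) - B) ** (C::real^'n^'k) = A ** C - B ** C"
  by (simp add: matrix_matrix_mult_def vec_eq_iff sum_subtractf ring_distribs)

lemma linear_mult_left: "linear (\<lambda>X::real^'n^'k. (M::real^'k^'m) ** X)"
  by (rule linearI) (simp_all add: matrix_add_ldistrib mult_scaleR_right)

lemma bl_mult_left: "bounded_linear (\<lambda>X::real^'n^'k. (M::real^'k^'m) ** X)"
  by (rule linear_conv_bounded_linear[THEN iffD1, OF linear_mult_left])

lemma linear_mult_right: "linear (\<lambda>X::real^'k^'m. X ** (M::real^'n^'k))"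
  by (rule linearI) (simp_all add: matrix_add_rdist mult_scaleR_left)

lemma bl_mult_right: "bounded_linear (\<lambda>X::real^'k^'m. X ** (M::real^'n^'k))"
  by (rule linear_conv_bounded_linear[THEN iffD1, OF linear_mult_right])

lemma mexp_scaled: "mexp (t *\<^sub>R M) = (\<Sum>k. (t^k / fact k) *\<^sub>R mat_pow M k)"
  by (simp add: mexp_def mat_pow_scaleR)

lemma summable_mexp_scaled: "summable (\<lambda>k. (t^k / fact k) *\<^sub>R mat_pow (M::real^'n^'n) k)"
  using summable_mexp[of "t *\<^sub>R M"] by (simp add: mat_pow_scaleR)

lemma mexp_entry: "mexp (t *\<^sub>R M) $ i $ j = (\<Sum>k. (mat_pow M k $ i $ j / fact k) * t^k)"
  unfolding mexp_scaled
  by (subst bounded_linear.suminf[OF bl_entry summable_mexp_scaled]) (auto intro!: suminf_cong)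

lemma mexp_mult_left_entry:
  "(M ** mexp (t *\<^sub>R M)) $ i $ j = (\<Sum>k. (mat_pow M (Suc k) $ i $ j / fact k) * t^k)"
proof -
  have "M ** mexp (t *\<^sub>R M) = (\<Sum>k. M ** ((t^k / fact k) *\<^sub>R mat_pow M k))"
    unfolding mexp_scaled by (rule bounded_linear.suminf[OF bl_mult_left summable_mexp_scaled])
  also have "\<dots> = (\<Sum>k. (t^k / fact k) *\<^sub>R mat_pow M (Suc k))"
    by (simp add: mult_scaleR_right)
  finally have "(M ** mexp (t *\<^sub>R M)) $ i $ j = (\<Sum>k. (t^k / fact k) *\<^sub>R mat_pow M (Suc k)) $ i $ j"
    by simp
  also have "\<dots> = (\<Sum>k. ((t^k / fact k) *\<^sub>R mat_pow M (Suc k)) $ i $ j)"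
  proof (rule bounded_linear.suminf[OF bl_entry])
    show "summable (\<lambda>k. (t^k / fact k) *\<^sub>R mat_pow M (Suc k))"
      using bounded_linear.summable[OF bl_mult_left summable_mexp_scaled, of M t]
      by (simp add: mult_scaleR_right)
  qed
  finally show ?thesis by (simp add: mult.commute)
qed

lemma mexp_has_derivative:
  "((\<lambda>t. mexp (t *\<^sub>R M)) has_vector_derivative (M ** mexp (t *\<^sub>R M))) (at t within S)"
proof (rule mat_has_vector_derivative)
  fix i j
  define c where "c = (\<lambda>k. mat_pow M k $ i $ j / fact k)"
  have sm: "summable (\<lambda>k. c k * y ^ k)" for y :: real
  proof -
    have "summable (\<lambda>k. ((y^k / fact k) *\<^sub>R mat_pow M k) $ i $ j)"
      by (rule bounded_linear.summable[OF bl_entry summable_mexp_scaled])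
    moreover have "(\<lambda>k. ((y^k / fact k) *\<^sub>R mat_pow M k) $ i $ j) = (\<lambda>k. c k * y ^ k)"
      by (auto simp: c_def)
    ultimately show ?thesis by simp
  qed
  have "((\<lambda>t. \<Sum>k. c k * t^k) has_real_derivative (\<Sum>k. diffs c k * t^k)) (at t)"
    by (rule termdiffs_strong_converges_everywhere) (rule sm)
  moreover have "(\<lambda>t. \<Sum>k. c k * t^k) = (\<lambda>t. mexp (t *\<^sub>R M) $ i $ j)"
    by (simp add: mexp_entry c_def)
  moreover have "(\<Sum>k. diffs c k * t^k) = (M ** mexp (t *\<^sub>R M)) $ i $ j"
  proof -
    have "diffs c k = mat_pow M (Suc k) $ i $ j / fact k" for k
      by (simp add: diffs_def c_def del: mat_pow.simps)
    then show ?thesis by (simp add: mexp_mult_left_entry del: mat_pow.simps)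
  qed
  ultimately show "((\<lambda>t. mexp (t *\<^sub>R M) $ i $ j) has_real_derivative (M ** mexp (t *\<^sub>R M)) $ i $ j) (at t within S)"
    by (metis has_field_derivative_at_within)
qed

lemma mexp_commute: "M ** mexp (t *\<^sub>R M) = mexp (t *\<^sub>R M) ** M"
proof -
  have "M ** mexp (t *\<^sub>R M) = (\<Sum>k. M ** ((t^k / fact k) *\<^sub>R mat_pow M k))"
    unfolding mexp_scaled by (rule bounded_linear.suminf[OF bl_mult_left summable_mexp_scaled])
  also have "\<dots> = (\<Sum>k. ((t^k / fact k) *\<^sub>R mat_pow M k) ** M)"
    by (simp add: mult_scaleR_right mult_scaleR_left mat_pow_commute)
  also have "\<dots> = mexp (t *\<^sub>R M) ** M"
    unfolding mexp_scaled by (rule bounded_linear.suminf[OF bl_mult_right summable_mexp_scaled, symmetric])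
  finally show ?thesis .
qed

lemma mexp_transpose: "transpose (mexp (t *\<^sub>R M)) = mexp (t *\<^sub>R transpose M)"
proof -
  have bl: "bounded_linear (transpose :: real^'n^'n \<Rightarrow> real^'n^'n)"
    by (rule linear_conv_bounded_linear[THEN iffD1]) (rule linearI, simp_all add: transpose_def vec_eq_iff)
  show ?thesis unfolding mexp_scaled
    by (subst bounded_linear.suminf[OF bl summable_mexp_scaled]) (simp add: transpose_scalar mat_pow_transpose)
qed

lemma mexp_zero: "mexp (0 *\<^sub>R M) = mat 1"
proof -
  have "mexp (0 *\<^sub>R M) = (\<Sum>k. (0^k / fact k) *\<^sub>R mat_pow M k)" by (rule mexp_scaled)
  also have "\<dots> = (\<Sum>k. if k = 0 then mat 1 else 0)"
    by (rule suminf_cong) simp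
  also have "\<dots> = mat 1" using sums_single[of 0 "\<lambda>_. mat 1 :: real^'n^'n"] by (simp add: sums_iff)
  finally show ?thesis .
qed


lemma norm_vec_sq: "norm (x::'a::real_normed_vector^'n)^2 = (\<Sum>i\<in>UNIV. norm (x$i)^2)"
  by (simp add: norm_vec_def L2_set_def sum_nonneg)

lemma norm_mat_sq: "norm (A::real^'n^'m)^2 = (\<Sum>i\<in>UNIV. \<Sum>j\<in>UNIV. (A$i$j)^2)"
  by (simp add: norm_vec_sq)

lemma norm_transpose: "norm (transpose (A::real^'n^'m)) = norm A"
proof -
  have "norm (transpose A)^2 = norm A^2"
    unfolding norm_mat_sq by (simp add: transpose_def) (rule sum.swap)
  then show ?thesis by (simp add: power2_eq_iff_nonneg)
qed

lemma norm_mult_le: "norm ((A::real^'k^'m) ** (B::real^'n^'k)) \<le> norm A * norm B"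
proof -
  define col where "col j = (\<chi> k. B$k$j)" for j
  have entry: "(A ** B)$i$j = A$i \<bullet> col j" for i j
    by (simp add: matrix_matrix_mult_def inner_vec_def col_def)
  have colsum: "(\<Sum>j\<in>UNIV. norm (col j)^2) = norm B^2"
    by (simp add: norm_mat_sq norm_vec_sq col_def) (rule sum.swap)
  have "norm (A ** B)^2 = (\<Sum>i\<in>UNIV. \<Sum>j\<in>UNIV. (A$i \<bullet> col j)^2)"
    by (simp add: norm_mat_sq entry)
  also have "\<dots> \<le> (\<Sum>i\<in>UNIV. \<Sum>j\<in>UNIV. norm (A$i)^2 * norm (col j)^2)"
  proof (intro sum_mono)
    fix i j
    have "\<bar>A$i \<bullet> col j\<bar> \<le> norm (A$i) * norm (col j)" by (rule Cauchy_Schwarz_ineq2)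
    then have "\<bar>A$i \<bullet> col j\<bar>^2 \<le> (norm (A$i) * norm (col j))^2"
      by (intro power_mono) auto
    then show "(A$i \<bullet> col j)^2 \<le> norm (A$i)^2 * norm (col j)^2"
      by (simp add: power_mult_distrib)
  qed
  also have "\<dots> = (\<Sum>i\<in>UNIV. norm (A$i)^2 * norm B^2)"
    by (simp add: sum_distrib_left[symmetric] colsum)
  also have "\<dots> = (\<Sum>i\<in>UNIV. norm (A$i)^2) * norm B^2"
    by (simp add: sum_distrib_right)
  also have "\<dots> = (norm A * norm B)^2"
    by (simp add: norm_vec_sq power_mult_distrib)
  finally show ?thesis
    by (rule power2_le_imp_le) simp
qed

lemma norm_mult3_le: "norm ((A::real^'k^'m) ** (X::real^'l^'k) ** (B::real^'n^'l)) \<le> norm A * norm X * norm B"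
  by (metis (no_types, opaque_lifting) mult_right_mono norm_ge_zero norm_mult_le order_trans)

lemma mexp_cont: "continuous_on S (\<lambda>t. mexp (t *\<^sub>R M))"
  using has_vector_derivative_continuous[OF mexp_has_derivative[of M _ UNIV]]
  by (auto intro: continuous_at_imp_continuous_on)

lemma tail:
  fixes g :: "real \<Rightarrow> real^'n^'m"
  assumes cont: "continuous_on {0..} g" and a: "a > 0"
    and bd: "\<And>t. t \<ge> 0 \<Longrightarrow> norm (g t) \<le> K * exp (-a*t)"
  shows "g integrable_on {0..}" "(\<lambda>k. integral {0..real k} g) \<longlonglongrightarrow> integral {0..} g"
proof -
  define f where "f k t = (if t \<in> {0..real k} then g t else 0)" for k :: nat and t
  have fi: "f k integrable_on {0..}" for k
  proof -
    have "g integrable_on {0..real k}"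
      by (rule integrable_continuous_interval) (rule continuous_on_subset[OF cont], auto)
    then show ?thesis unfolding f_def by (subst integrable_restrict_Int) (simp add: Int_absorb2)
  qed
  have hi: "(\<lambda>t. K * exp (-a*t)) integrable_on {0..}"
    using integrable_cmul[OF integrable_on_exp_minus_to_infinity[OF a, of 0], of K] by simp
  have le: "norm (f k t) \<le> K * exp (-a*t)" if "t \<in> {0..}" for k t
    using bd[of t] that order_trans[OF norm_ge_zero bd[of t]] by (auto simp: f_def)
  have conv: "(\<lambda>k. f k t) \<longlonglongrightarrow> g t" if "t \<in> {0..}" for t
  proof (rule tendsto_eventually)
    obtain N :: nat where "t \<le> real N" using real_arch_simple by blast
    then show "\<forall>\<^sub>F k in sequentially. f k t = g t"
      using that by (auto simp: f_def eventually_sequentially intro!: exI[of _ N])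
  qed
  have int_eq: "integral {0..} (f k) = integral {0..real k} g" for k
    unfolding f_def by (subst integral_restrict_Int) (simp add: Int_absorb2)
  show "g integrable_on {0..}"
    by (rule dominated_convergence(1)[OF fi hi le conv])
  show "(\<lambda>k. integral {0..real k} g) \<longlonglongrightarrow> integral {0..} g"
    using dominated_convergence(2)[OF fi hi le conv] by (simp add: int_eq)
qed

definition decays :: "real^'n^'n \<Rightarrow> bool" where
  "decays M \<longleftrightarrow> (\<exists>C a. a > 0 \<and> (\<forall>t\<ge>0. norm (mexp (t *\<^sub>R M)) \<le> C * exp (-a*t)))"

definition lyapI :: "real^'n^'n \<Rightarrow> real^'n^'n \<Rightarrow> real^'n^'n" where
  "lyapI M X = integral {0..} (\<lambda>t. transpose (mexp (t *\<^sub>R M)) ** X ** mexp (t *\<^sub>R M))"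

lemma lqr_cost_lyapI: "lqr_cost A B Q R U = trace (lyapI (A + B ** U) (Q + transpose U ** R ** U))"
  by (simp add: lqr_cost_def lyapI_def)

lemma lyap_integrand_bound:
  assumes "\<forall>t\<ge>0. norm (mexp (t *\<^sub>R M)) \<le> C * exp (-a*t)" "t \<ge> 0"
  shows "norm (transpose (mexp (t *\<^sub>R M)) ** X ** mexp (t *\<^sub>R M)) \<le> (C^2 * norm X) * exp (-(2*a)*t)"
proof -
  have e: "norm (mexp (t *\<^sub>R M)) \<le> C * exp (-a*t)" using assms by blast
  have e0: "0 \<le> C * exp (-a*t)" using order_trans[OF norm_ge_zero e] .
  have "norm (transpose (mexp (t *\<^sub>R M)) ** X ** mexp (t *\<^sub>R M)) \<le> norm (mexp (t *\<^sub>R M)) * norm X * norm (mexp (t *\<^sub>R M))"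
    using norm_mult3_le[of "transpose (mexp (t *\<^sub>R M))" X] by (simp add: norm_transpose)
  also have "\<dots> \<le> (C * exp (-a*t)) * norm X * (C * exp (-a*t))"
    by (intro mult_mono e e0 mult_nonneg_nonneg) auto
  also have "\<dots> = (C^2 * norm X) * (exp (-a*t) * exp (-a*t))"
    by (simp add: power2_eq_square algebra_simps)
  also have "exp (-a*t) * exp (-a*t) = exp (-(2*a)*t)"
  proof -
    have "-(2*a)*t = (-a*t) + (-a*t)" by simp
    then show ?thesis by (simp only: exp_add)
  qed
  finally show ?thesis .
qed

lemma lyap_deriv:
  "((\<lambda>t. transpose (mexp (t *\<^sub>R M)) ** X ** mexp (t *\<^sub>R M)) has_vector_derivative
     (transpose M ** (transpose (mexp (t *\<^sub>R M)) ** X ** mexp (t *\<^sub>R M)) +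
      (transpose (mexp (t *\<^sub>R M)) ** X ** mexp (t *\<^sub>R M)) ** M)) (at t within S)"
proof -
  have bb: "bounded_bilinear (\<lambda>(A::real^'n^'n) (B::real^'n^'n). A ** B)"
    unfolding bilinear_conv_bounded_bilinear[symmetric] bilinear_def
    using linear_mult_left linear_mult_right by blast
  have d1: "((\<lambda>t. mexp (t *\<^sub>R transpose M) ** X) has_vector_derivative (transpose M ** mexp (t *\<^sub>R transpose M)) ** X) (at t within S)"
    using bounded_linear.has_vector_derivative[OF bl_mult_right mexp_has_derivative] .
  have "((\<lambda>t. (mexp (t *\<^sub>R transpose M) ** X) ** mexp (t *\<^sub>R M)) has_vector_derivative
     ((mexp (t *\<^sub>R transpose M) ** X) ** (M ** mexp (t *\<^sub>R M)) + ((transpose M ** mexp (t *\<^sub>R transpose M)) ** X) ** mexp (t *\<^sub>R M))) (at t within S)"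
    by (rule bounded_bilinear.has_vector_derivative[OF bb d1 mexp_has_derivative])
  then show ?thesis
    by (simp add: mexp_transpose mexp_commute matrix_mul_assoc add.commute)
qed

lemma lyap:
  assumes "decays M"
  shows "(\<lambda>t. transpose (mexp (t *\<^sub>R M)) ** X ** mexp (t *\<^sub>R M)) integrable_on {0..}"
    and "transpose M ** lyapI M X + lyapI M X ** M = - X"
proof -
  obtain C a where a: "a > 0" and bd: "\<forall>t\<ge>0. norm (mexp (t *\<^sub>R M)) \<le> C * exp (-a*t)"
    using assms unfolding decays_def by blast
  define g where "g t = transpose (mexp (t *\<^sub>R M)) ** X ** mexp (t *\<^sub>R M)" for t
  define h where "h t = transpose M ** g t + g t ** M" for t
  have gd: "\<And>t S. (g has_vector_derivative h t) (at t within S)"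
    unfolding g_def h_def by (rule lyap_deriv)
  have gc: "continuous_on S g" for S
    by (rule continuous_at_imp_continuous_on) (meson has_vector_derivative_continuous gd)
  have a2: "2*a > 0" using a by simp
  have gb: "norm (g t) \<le> (C^2 * norm X) * exp (-(2*a)*t)" if "t \<ge> 0" for t
    unfolding g_def by (rule lyap_integrand_bound[OF bd that])
  have gi: "g integrable_on {0..}" by (rule tail(1)[OF gc a2 gb])
  then show "(\<lambda>t. transpose (mexp (t *\<^sub>R M)) ** X ** mexp (t *\<^sub>R M)) integrable_on {0..}"
    unfolding g_def .
  have hc: "continuous_on {0..} h" unfolding h_def
    by (intro continuous_intros gc bounded_linear.continuous_on[OF bl_mult_left] bounded_linear.continuous_on[OF bl_mult_right])
  have hb: "norm (h t) \<le> (2 * norm M * (C^2 * norm X)) * exp (-(2*a)*t)" if "t \<ge> 0" for t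
  proof -
    have "norm (h t) \<le> norm (transpose M ** g t) + norm (g t ** M)"
      unfolding h_def by (rule norm_triangle_ineq)
    also have "\<dots> \<le> norm M * norm (g t) + norm (g t) * norm M"
      using norm_mult_le[of "transpose M" "g t"] norm_mult_le[of "g t" M] by (intro add_mono) (simp_all add: norm_transpose)
    also have "\<dots> = (2 * norm M) * norm (g t)" by simp
    also have "\<dots> \<le> (2 * norm M) * ((C^2 * norm X) * exp (-(2*a)*t))"
      using gb[OF that] by (intro mult_left_mono) auto
    finally show ?thesis by simp
  qed
  have lim1: "(\<lambda>k. integral {0..real k} h) \<longlonglongrightarrow> integral {0..} h" by (rule tail(2)[OF hc a2 hb])
  have ftc: "integral {0..real k} h = g (real k) - g 0" for k
  proof -
    have "(h has_integral g (real k) - g 0) {0..real k}"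
      by (rule fundamental_theorem_of_calculus) (auto intro: gd)
    then show ?thesis by (rule integral_unique)
  qed
  have g0: "g 0 = X" unfolding g_def using mexp_zero[of M] by simp
  have glim: "(\<lambda>k. g (real k)) \<longlonglongrightarrow> 0"
  proof (rule tendsto_norm_zero_cancel, rule tendsto_sandwich[OF _ _ tendsto_const])
    show "\<forall>\<^sub>F k in sequentially. 0 \<le> norm (g (real k))" by simp
    show "\<forall>\<^sub>F k in sequentially. norm (g (real k)) \<le> (C^2 * norm X) * exp (-(2*a)*real k)"
      using gb by simp
    have "(\<lambda>k. exp (-(2*a)*real k)) \<longlonglongrightarrow> 0"
      using a by real_asymp
    then show "(\<lambda>k. (C^2 * norm X) * exp (-(2*a)*real k)) \<longlonglongrightarrow> 0"
      by (metis mult_zero_right tendsto_mult_left)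
  qed
  have "(\<lambda>k. integral {0..real k} h) \<longlonglongrightarrow> 0 - X"
    unfolding ftc g0 by (intro tendsto_diff glim tendsto_const)
  then have hint: "integral {0..} h = - X" using lim1 LIMSEQ_unique by fastforce
  have "integral {0..} h = transpose M ** integral {0..} g + integral {0..} g ** M"
  proof -
    have i1: "(\<lambda>t. transpose M ** g t) integrable_on {0..}"
      using integrable_linear[OF gi bl_mult_left] by (simp add: o_def)
    have i2: "(\<lambda>t. g t ** M) integrable_on {0..}"
      using integrable_linear[OF gi bl_mult_right] by (simp add: o_def)
    have "integral {0..} h = integral {0..} (\<lambda>t. transpose M ** g t) + integral {0..} (\<lambda>t. g t ** M)"
      unfolding h_def by (rule integral_add[OF i1 i2])
    also have "\<dots> = transpose M ** integral {0..} g + integral {0..} g ** M"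
      using integral_linear[OF gi bl_mult_left, of "transpose M"] integral_linear[OF gi bl_mult_right, of M]
      by (simp add: o_def)
    finally show ?thesis .
  qed
  then show "transpose M ** lyapI M X + lyapI M X ** M = - X"
    using hint unfolding lyapI_def g_def by simp
qed


lemma gmat_add_rdist: "((A::'a::comm_ring_1^'k^'m) + B) ** (C::'a^'n^'k) = A ** C + B ** C"
  by (simp add: matrix_matrix_mult_def vec_eq_iff sum.distrib ring_distribs)

lemma gmat_diff_ldist: "(A::'a::comm_ring_1^'k^'m) ** ((B::'a^'n^'k) - C) = A ** B - A ** C"
  by (simp add: matrix_matrix_mult_def vec_eq_iff sum_subtractf ring_distribs)

lemma gmat_diff_rdist: "((A::'a::comm_ring_1^'k^'m) - B) ** (C::'a^'n^'k) = A ** C - B ** C"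
  by (simp add: matrix_matrix_mult_def vec_eq_iff sum_subtractf ring_distribs)

lemma mat_scal_left: "mat c ** (A::'a::comm_ring_1^'n^'m) = (\<chi> i j. c * A$i$j)"
  by (simp add: matrix_matrix_mult_def mat_def vec_eq_iff if_distrib if_distribR sum.delta cong: if_cong)

lemma mat_scal_right: "(A::'a::comm_ring_1^'n^'m) ** mat c = (\<chi> i j. A$i$j * c)"
  by (simp add: matrix_matrix_mult_def mat_def vec_eq_iff if_distrib if_distribR sum.delta' cong: if_cong)

lemma mat_commute: "mat c ** (A::'a::comm_ring_1^'k^'m) = A ** mat c"
  by (simp add: mat_scal_left mat_scal_right mult.commute)

lemma mat_mult_mat: "mat a ** mat b = (mat (a * b) :: 'a::comm_ring_1^'n^'n)"
  by (subst mat_scal_left) (simp add: vec_eq_iff mat_def)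

lemma mat_add: "mat (a + b) = (mat a + mat b :: 'a::comm_ring_1^'n^'n)"
  by (simp add: vec_eq_iff mat_def)

lemma mat_scal_assoc: "mat c ** ((A::'a::comm_ring_1^'k^'m) ** (B::'a^'n^'k)) = A ** (mat c ** B)"
proof -
  have "mat c ** (A ** B) = (mat c ** A) ** B" by (rule matrix_mul_assoc)
  also have "\<dots> = (A ** mat c) ** B" by (simp only: mat_commute[of c A])
  also have "\<dots> = A ** (mat c ** B)" by (rule matrix_mul_assoc[symmetric])
  finally show ?thesis .
qed

lemma msum_left: "(A::'a::comm_ring_1^'k^'m) ** sum f S = (\<Sum>i\<in>S. A ** (f i :: 'a^'n^'k))"
  by (induction S rule: infinite_finite_induct) (simp_all add: matrix_add_ldistrib)

lemma msum_right: "sum f S ** (A::'a::comm_ring_1^'n^'k) = (\<Sum>i\<in>S. (f i :: 'a^'k^'m) ** A)"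
  by (induction S rule: infinite_finite_induct) (simp_all add: gmat_add_rdist)

lemma mat1_neq0: "(mat 1 :: 'a::comm_ring_1^'n^'n) \<noteq> 0"
proof
  assume "(mat 1 :: 'a^'n^'n) = 0"
  then have "(mat 1 :: 'a^'n^'n) $ undefined $ undefined = 0" by simp
  then show False by (simp add: mat_def)
qed

primrec cmpow :: "complex^'n^'n \<Rightarrow> nat \<Rightarrow> complex^'n^'n" where
  "cmpow N 0 = mat 1"
| "cmpow N (Suc k) = N ** cmpow N k"

lemma complexify_mult: "complexify ((A::real^'k^'m) ** (B::real^'n^'k)) = complexify A ** complexify B"
  by (simp add: complexify_def matrix_matrix_mult_def vec_eq_iff)

lemma complexify_add: "complexify (A + B) = complexify A + complexify B"
  by (simp add: complexify_def vec_eq_iff)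

lemma complexify_scaleR: "complexify (c *\<^sub>R A) = mat (complex_of_real c) ** complexify A"
  by (simp add: complexify_def mat_scal_left vec_eq_iff)

lemma complexify_mat1: "complexify (mat 1 :: real^'n^'n) = mat 1"
  by (simp add: complexify_def mat_def vec_eq_iff)

lemma complexify_0: "complexify 0 = 0"
  by (simp add: complexify_def vec_eq_iff)

lemma complexify_sum: "complexify (sum f S) = (\<Sum>i\<in>S. complexify (f i))"
  by (induction S rule: infinite_finite_induct) (simp_all add: complexify_0 complexify_add)

lemma complexify_pow: "complexify (mat_pow M k) = cmpow (complexify M) k"
  by (induction k) (simp_all add: complexify_mat1 complexify_mult)

lemma cmpow_commute: "cmpow N k ** N = N ** cmpow N k"
  by (induction k) (simp_all add: matrix_mul_assoc[symmetric])

definition cpeval :: "complex poly \<Rightarrow> complex^'n^'n \<Rightarrow> complex^'n^'n" where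
  "cpeval q N = (\<Sum>k\<le>degree q. mat (coeff q k) ** cmpow N k)"

lemma cpeval_bound:
  assumes "degree q \<le> K"
  shows "cpeval q N = (\<Sum>k\<le>K. mat (coeff q k) ** cmpow N k)"
proof -
  have "(\<Sum>k\<le>K. mat (coeff q k) ** cmpow N k) = (\<Sum>k\<le>degree q. mat (coeff q k) ** cmpow N k)"
  proof (rule sum.mono_neutral_right)
    show "\<forall>i\<in>{..K} - {..degree q}. mat (coeff q i) ** cmpow N i = 0"
      by (auto simp: coeff_eq_0)
  qed (use assms in auto)
  then show ?thesis by (simp add: cpeval_def)
qed

lemma cpeval_add: "cpeval (p + q) N = cpeval p N + cpeval q N"
proof -
  define K where "K = max (degree p) (degree q)"
  have "degree (p + q) \<le> K" "degree p \<le> K" "degree q \<le> K"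
    by (auto simp: K_def degree_add_le)
  then show ?thesis
    by (simp add: cpeval_bound[of _ K] mat_add gmat_add_rdist sum.distrib)
qed

lemma cpeval_smult: "cpeval (smult c q) N = mat c ** cpeval q N"
proof -
  have "degree (smult c q) \<le> degree q" by simp
  then show ?thesis
    by (simp add: cpeval_bound[of _ "degree q"] cpeval_def msum_left matrix_mul_assoc mat_mult_mat)
qed

lemma cpeval_shift: "cpeval (pCons 0 q) N = N ** cpeval q N"
proof -
  have "degree (pCons 0 q) \<le> Suc (degree q)" by simp
  then have "cpeval (pCons 0 q) N = (\<Sum>k\<le>Suc (degree q). mat (coeff (pCons 0 q) k) ** cmpow N k)"
    by (rule cpeval_bound)
  also have "\<dots> = (\<Sum>k\<le>degree q. mat (coeff q k) ** cmpow N (Suc k))"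
    by (subst sum.atMost_Suc_shift) (simp del: cmpow.simps)
  also have "\<dots> = (\<Sum>k\<le>degree q. N ** (mat (coeff q k) ** cmpow N k))"
    by (simp add: mat_scal_assoc)
  also have "\<dots> = N ** cpeval q N"
    by (simp add: cpeval_def msum_left)
  finally show ?thesis .
qed

lemma cpeval_one: "cpeval 1 N = mat 1"
  by (simp add: cpeval_def)

lemma cpeval_linear_mult: "cpeval ([:-\<mu>, 1:] * r) N = (N - mat \<mu>) ** cpeval r N"
proof -
  have "[:-\<mu>, 1:] * r = smult (-\<mu>) r + pCons 0 r"
    by (simp add: mult_pCons_left)
  then have "cpeval ([:-\<mu>, 1:] * r) N = mat (-\<mu>) ** cpeval r N + N ** cpeval r N"
    by (simp only: cpeval_add cpeval_smult cpeval_shift)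
  also have "\<dots> = (N - mat \<mu>) ** cpeval r N"
  proof -
    have "mat (-\<mu>) ** cpeval r N = - (mat \<mu> ** cpeval r N)" by (simp add: mat_scal_left vec_eq_iff)
    then show ?thesis
      by (simp add: gmat_diff_rdist)
  qed
  finally show ?thesis .
qed

primrec lprod :: "complex^'n^'n \<Rightarrow> complex list \<Rightarrow> complex^'n^'n" where
  "lprod N [] = mat 1"
| "lprod N (\<mu> # \<mu>s) = (N - mat \<mu>) ** lprod N \<mu>s"

lemma cpeval_prod_list: "cpeval (prod_list (map (\<lambda>\<mu>. [:-\<mu>, 1:]) \<mu>s)) N = lprod N \<mu>s"
  by (induction \<mu>s) (simp_all add: cpeval_one cpeval_linear_mult del: mult_pCons_left)

lemma lin_commute: "(N - mat \<mu>) ** (N - mat \<nu>) = (N - mat \<nu>) ** (N - mat \<mu> :: complex^'n^'n)"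
  by (simp add: gmat_diff_ldist gmat_diff_rdist mat_commute[of _ N] mat_mult_mat mult.commute algebra_simps)

lemma lprod_commute: "lprod N \<mu>s ** (N - mat \<nu>) = (N - mat \<nu>) ** lprod N \<mu>s"
proof (induction \<mu>s)
  case Nil then show ?case by simp
next
  case (Cons \<mu> \<mu>s)
  have "lprod N (\<mu> # \<mu>s) ** (N - mat \<nu>) = (N - mat \<mu>) ** (lprod N \<mu>s ** (N - mat \<nu>))"
    by (simp add: matrix_mul_assoc)
  also have "\<dots> = ((N - mat \<mu>) ** (N - mat \<nu>)) ** lprod N \<mu>s"
    by (simp add: Cons matrix_mul_assoc)
  also have "\<dots> = (N - mat \<nu>) ** lprod N (\<mu> # \<mu>s)"
    by (simp add: lin_commute matrix_mul_assoc)
  finally show ?case .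
qed

definition is_eig :: "complex^'n^'n \<Rightarrow> complex \<Rightarrow> bool" where
  "is_eig N \<mu> \<longleftrightarrow> (\<exists>v. v \<noteq> 0 \<and> N *v v = \<mu> *s v)"

lemma eigenvalues_is_eig: "eigenvalues M = {\<mu>. is_eig (complexify M) \<mu>}"
  by (simp add: eigenvalues_def is_eig_def)

lemma column_mult: "(\<chi> i. (A ** B) $ i $ j) = A *v (\<chi> i. B $ i $ j)"
  by (simp add: matrix_matrix_mult_def matrix_vector_mult_def vec_eq_iff)

lemma mat_mulv: "mat c *v (v::'a::comm_ring_1^'n) = c *s v"
  by (simp add: matrix_vector_mult_def mat_def vec_eq_iff if_distrib if_distribR sum.delta cong: if_cong)

lemma mulv_smult: "(A::'a::comm_ring_1^'n^'m) *v (c *s v) = c *s (A *v v)"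
  by (simp add: matrix_vector_mult_def vec_eq_iff sum_distrib_left algebra_simps)

lemma not_eig_cancel:
  assumes "(N - mat \<mu>) ** Y = 0" "\<not> is_eig N \<mu>"
  shows "Y = (0::complex^'m^'n)"
proof -
  have col: "(\<chi> i. Y $ i $ j) = 0" for j
  proof -
    define v where "v = (\<chi> i. Y $ i $ j)"
    have "(N - mat \<mu>) *v v = 0"
      using column_mult[of "N - mat \<mu>" Y j] assms(1) by (simp add: v_def zero_vec_def[symmetric])
    then have "N *v v = \<mu> *s v"
      by (simp add: matrix_vector_mult_diff_rdistrib mat_mulv)
    then show ?thesis using assms(2) unfolding is_eig_def v_def by blast
  qed
  show ?thesis
  proof (rule vec_eq_iff[THEN iffD2], intro allI, rule vec_eq_iff[THEN iffD2], intro allI)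
    fix i j
    have "(\<chi> i. Y $ i $ j) $ i = 0 $ i" using col[of j] by simp
    then show "Y $ i $ j = 0 $ i $ j" by simp
  qed
qed

lemma strip:
  "lprod N \<mu>s ** Z = 0 \<Longrightarrow> lprod N (filter (is_eig N) \<mu>s) ** Z = 0"
proof (induction \<mu>s arbitrary: Z)
  case Nil then show ?case by simp
next
  case (Cons \<mu> \<mu>s)
  show ?case
  proof (cases "is_eig N \<mu>")
    case True
    have "lprod N \<mu>s ** ((N - mat \<mu>) ** Z) = ((N - mat \<mu>) ** lprod N \<mu>s) ** Z"
      by (simp only: matrix_mul_assoc lprod_commute)
    then have "lprod N \<mu>s ** ((N - mat \<mu>) ** Z) = 0"
      using Cons.prems by simp
    then have "lprod N (filter (is_eig N) \<mu>s) ** ((N - mat \<mu>) ** Z) = 0" by (rule Cons.IH)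
    moreover have "lprod N (filter (is_eig N) \<mu>s) ** ((N - mat \<mu>) ** Z) = ((N - mat \<mu>) ** lprod N (filter (is_eig N) \<mu>s)) ** Z"
      by (simp only: matrix_mul_assoc lprod_commute)
    ultimately show ?thesis using True by simp
  next
    case False
    have "(N - mat \<mu>) ** (lprod N \<mu>s ** Z) = 0"
      using Cons.prems by (simp add: matrix_mul_assoc)
    then have "lprod N \<mu>s ** Z = 0" using False by (rule not_eig_cancel)
    then have "lprod N (filter (is_eig N) \<mu>s) ** Z = 0" by (rule Cons.IH)
    then show ?thesis using False by simp
  qed
qed

lemma lprod_eigvec:
  assumes "N *v v = c *s v"
  shows "lprod N \<mu>s *v v = prod_list (map (\<lambda>\<mu>. c - \<mu>) \<mu>s) *s v"
proof (induction \<mu>s)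
  case Nil then show ?case by simp
next
  case (Cons \<mu> \<mu>s)
  have "lprod N (\<mu> # \<mu>s) *v v = (N - mat \<mu>) *v (prod_list (map (\<lambda>\<mu>. c - \<mu>) \<mu>s) *s v)"
    by (simp add: Cons matrix_vector_mul_assoc[symmetric])
  also have "\<dots> = prod_list (map (\<lambda>\<mu>. c - \<mu>) \<mu>s) *s ((N - mat \<mu>) *v v)"
    by (rule mulv_smult)
  also have "(N - mat \<mu>) *v v = (c - \<mu>) *s v"
    using assms by (simp only: matrix_vector_mult_diff_rdistrib mat_mulv vector_sub_rdistrib)
  also have "prod_list (map (\<lambda>\<mu>. c - \<mu>) \<mu>s) *s ((c - \<mu>) *s v) = prod_list (map (\<lambda>\<mu>. c - \<mu>) (\<mu> # \<mu>s)) *s v"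
    by (simp only: vector_smult_assoc list.map prod_list.Cons mult.commute)
  finally show ?case .
qed


lemma annihilating:
  fixes M :: "real^'n^'n"
  shows "\<exists>c K. (\<exists>k\<le>K. c k \<noteq> 0) \<and> (\<Sum>k\<le>K. c k *\<^sub>R mat_pow M k) = 0"
proof -
  define N where "N = CARD('n) * CARD('n)"
  have DIMN: "DIM(real^'n^'n) = N" by (simp add: N_def)
  show ?thesis
  proof (cases "inj_on (mat_pow M) {..N}")
    case True
    define S where "S = mat_pow M ` {..N}"
    have cS: "card S = Suc N" using True by (simp add: S_def card_image)
    have "\<not> independent S"
    proof
      assume "independent S"
      then have "card S \<le> DIM(real^'n^'n)" by (rule independent_bound[THEN conjunct2])
      then show False using cS DIMN by simp
    qed
    then have "dependent S" by simp
    then obtain t u where t: "finite t" "t \<subseteq> S" "(\<Sum>v\<in>t. u v *\<^sub>R v) = 0" "\<exists>v\<in>t. u v \<noteq> 0"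
      unfolding dependent_explicit by blast
    define A where "A = {k\<in>{..N}. mat_pow M k \<in> t}"
    have imA: "mat_pow M ` A = t" using t(2) unfolding A_def S_def by auto
    have injA: "inj_on (mat_pow M) A" using True by (rule inj_on_subset) (auto simp: A_def)
    define c where "c k = (if mat_pow M k \<in> t then u (mat_pow M k) else 0)" for k
    have "(\<Sum>k\<le>N. c k *\<^sub>R mat_pow M k) = (\<Sum>k\<le>N. if mat_pow M k \<in> t then u (mat_pow M k) *\<^sub>R mat_pow M k else 0)"
      by (rule sum.cong) (auto simp: c_def)
    also have "\<dots> = (\<Sum>k\<in>A. u (mat_pow M k) *\<^sub>R mat_pow M k)"
      unfolding A_def by (rule sum.inter_filter[symmetric]) simp
    also have "\<dots> = (\<Sum>v\<in>t. u v *\<^sub>R v)"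
      using sum.reindex[OF injA, of "\<lambda>v. u v *\<^sub>R v"] imA by (simp add: o_def)
    also have "\<dots> = 0" by (rule t(3))
    finally have sum0: "(\<Sum>k\<le>N. c k *\<^sub>R mat_pow M k) = 0" .
    obtain v where v: "v \<in> t" "u v \<noteq> 0" using t(4) by blast
    then obtain k where k: "k \<le> N" "mat_pow M k = v" using t(2) unfolding S_def by auto
    have "c k \<noteq> 0" using v k by (simp add: c_def)
    then show ?thesis using sum0 k by blast
  next
    case False
    then obtain i j where ij: "i \<le> N" "j \<le> N" "i \<noteq> j" "mat_pow M i = mat_pow M j"
      unfolding inj_on_def by auto
    define c where "c k = (if k = i then 1 else if k = j then -1 else (0::real))" for k
    have "(\<Sum>k\<le>N. c k *\<^sub>R mat_pow M k) = (\<Sum>k\<le>N. (if k = i then mat_pow M i else 0) + (if k = j then - mat_pow M j else 0))"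
      by (rule sum.cong) (use ij in \<open>auto simp: c_def\<close>)
    also have "\<dots> = mat_pow M i - mat_pow M j"
      using ij by (simp add: sum.distrib)
    also have "\<dots> = 0" using ij by simp
    finally have "(\<Sum>k\<le>N. c k *\<^sub>R mat_pow M k) = 0" .
    moreover have "c i \<noteq> 0" by (simp add: c_def)
    ultimately show ?thesis using ij by blast
  qed
qed

lemma eig_struct:
  fixes M :: "real^'n^'n"
  shows "\<exists>\<nu>s. eigenvalues M = set \<nu>s \<and> \<nu>s \<noteq> [] \<and> lprod (complexify M) \<nu>s = 0"
proof -
  define Mc where "Mc = complexify M"
  obtain c K where cK: "\<exists>k\<le>K. c k \<noteq> 0" "(\<Sum>k\<le>K. c k *\<^sub>R mat_pow M k) = 0"
    using annihilating by blast
  define q where "q = (\<Sum>k\<le>K. monom (complex_of_real (c k)) k)"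
  have cq: "coeff q k = (if k \<le> K then complex_of_real (c k) else 0)" for k
    by (simp add: q_def coeff_sum coeff_monom sum.delta')
  have q0: "q \<noteq> 0"
  proof
    assume "q = 0"
    then have "\<forall>k\<le>K. c k = 0" using cq by (metis coeff_0 of_real_eq_0_iff)
    then show False using cK(1) by blast
  qed
  have dq: "degree q \<le> K"
    by (rule degree_le) (simp add: cq)
  have "cpeval q Mc = (\<Sum>k\<le>K. mat (coeff q k) ** cmpow Mc k)"
    by (rule cpeval_bound[OF dq])
  also have "\<dots> = (\<Sum>k\<le>K. complexify (c k *\<^sub>R mat_pow M k))"
    by (rule sum.cong) (simp_all add: cq complexify_scaleR complexify_pow Mc_def)
  also have "\<dots> = complexify (\<Sum>k\<le>K. c k *\<^sub>R mat_pow M k)"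
    by (simp add: complexify_sum)
  also have "\<dots> = 0" using cK(2) by (simp add: complexify_0)
  finally have qM: "cpeval q Mc = 0" .
  obtain root where rt: "smult (lead_coeff q) (\<Prod>i<degree q. [:-root i, 1:]) = q"
    using complex_poly_decompose' by blast
  define \<mu>s where "\<mu>s = map root [0..<degree q]"
  have "(\<Prod>i<degree q. [:-root i, 1:]) = prod_list (map (\<lambda>\<mu>. [:-\<mu>, 1:]) \<mu>s)"
    by (simp add: \<mu>s_def prod.distinct_set_conv_list[symmetric] atLeast_upt)
  then have "q = smult (lead_coeff q) (prod_list (map (\<lambda>\<mu>. [:-\<mu>, 1:]) \<mu>s))" using rt by simp
  then have "cpeval q Mc = mat (lead_coeff q) ** lprod Mc \<mu>s"
    by (metis cpeval_smult cpeval_prod_list)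
  then have "mat (lead_coeff q) ** lprod Mc \<mu>s = 0" using qM by simp
  then have "mat (1 / lead_coeff q) ** (mat (lead_coeff q) ** lprod Mc \<mu>s) = 0" by simp
  then have lp0: "lprod Mc \<mu>s = 0" using q0 by (simp add: matrix_mul_assoc mat_mult_mat)
  define \<nu>s where "\<nu>s = filter (is_eig Mc) \<mu>s"
  have "lprod Mc \<nu>s ** mat 1 = 0" unfolding \<nu>s_def by (rule strip) (simp add: lp0)
  then have lpn: "lprod Mc \<nu>s = 0" by simp
  have sub1: "set \<nu>s \<subseteq> eigenvalues M" by (auto simp: \<nu>s_def eigenvalues_is_eig Mc_def)
  have sub2: "eigenvalues M \<subseteq> set \<nu>s"
  proof
    fix lam assume "lam \<in> eigenvalues M"
    then obtain v where v: "v \<noteq> 0" "Mc *v v = lam *s v"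
      by (auto simp: eigenvalues_is_eig is_eig_def Mc_def)
    have "prod_list (map (\<lambda>\<mu>. lam - \<mu>) \<nu>s) *s v = 0"
      using lprod_eigvec[OF v(2), of \<nu>s] lpn by simp
    then have "prod_list (map (\<lambda>\<mu>. lam - \<mu>) \<nu>s) = 0"
      using v(1) by (metis vector_mul_eq_0)
    then show "lam \<in> set \<nu>s" by (auto simp: prod_list_zero_iff)
  qed
  have "\<nu>s \<noteq> []"
  proof
    assume "\<nu>s = []"
    then have "(mat 1 :: complex^'n^'n) = 0" using lpn by simp
    then show False using mat1_neq0 by blast
  qed
  then show ?thesis using sub1 sub2 lpn unfolding Mc_def by blast
qed

lemma eig_finite: "finite (eigenvalues M)"
  using eig_struct[of M] by auto

lemma eig_nonempty: "eigenvalues M \<noteq> {}"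
  using eig_struct[of M] by auto

lemma abscissa_neg_iff: "spectral_abscissa M < 0 \<longleftrightarrow> (\<forall>lam\<in>eigenvalues M. Re lam < 0)"
proof -
  have f: "finite (Re ` eigenvalues M)" "Re ` eigenvalues M \<noteq> {}"
    using eig_finite eig_nonempty by auto
  show ?thesis unfolding spectral_abscissa_def using Max_less_iff[OF f] by auto
qed


lemma ode_bound:
  fixes f g :: "real \<Rightarrow> complex"
  assumes a: "a > 0" and nu: "Re \<nu> \<le> -2*a"
    and df: "\<And>t. (f has_vector_derivative (\<nu> * f t + g t)) (at t)"
    and gb: "\<And>t. t \<ge> 0 \<Longrightarrow> norm (g t) \<le> K * exp (-a*t)"
    and t: "t \<ge> 0"
  shows "norm (f t) \<le> (norm (f 0) + K / a) * exp (-a*t)"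
proof -
  define r where "r = - Re \<nu>"
  have r: "r \<ge> 2*a" using nu by (simp add: r_def)
  have ra: "r - a \<ge> a" using r by simp
  have ra0: "r - a > 0" using ra a by simp
  have K0: "K \<ge> 0" using gb[of 0] order_trans[OF norm_ge_zero gb[of 0]] by simp
  define u where "u s = exp (s *\<^sub>R (-\<nu>)) * f s" for s
  have du: "(u has_vector_derivative exp (s *\<^sub>R (-\<nu>)) * g s) (at s)" for s
  proof -
    have "(u has_vector_derivative exp (s *\<^sub>R (-\<nu>)) * (\<nu> * f s + g s) + exp (s *\<^sub>R (-\<nu>)) * (-\<nu>) * f s) (at s)"
      unfolding u_def by (rule has_vector_derivative_mult[OF exp_scaleR_has_vector_derivative_right df])
    then show ?thesis by (simp add: algebra_simps)
  qed
  have uc: "continuous_on S u" for S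
    by (rule continuous_at_imp_continuous_on) (meson has_vector_derivative_continuous du)
  define \<phi> where "\<phi> s = K * exp ((r - a) * s) / (r - a)" for s
  have d\<phi>: "(\<phi> has_vector_derivative K * exp ((r - a) * s)) (at s)" for s
  proof -
    have "((\<lambda>s. K * exp ((r - a) * s) / (r - a)) has_real_derivative K * (exp ((r - a) * s) * (r - a)) / (r - a)) (at s)"
      by (intro derivative_eq_intros) (use ra0 in auto)
    then show ?thesis using ra0 r a unfolding \<phi>_def by (simp add: has_real_derivative_iff_has_vector_derivative)
  qed
  have \<phi>c: "continuous_on S \<phi>" for S
    by (rule continuous_at_imp_continuous_on) (meson has_vector_derivative_continuous d\<phi>)
  have bnd: "norm (u t - u 0) \<le> \<phi> t - \<phi> 0"
  proof (cases "t = 0")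
    case True then show ?thesis by simp
  next
    case False
    then have t0: "0 < t" using t by simp
    show ?thesis
    proof (rule differentiable_bound_general[OF t0 uc \<phi>c])
      show "(u has_vector_derivative exp (x *\<^sub>R (-\<nu>)) * g x) (at x)" for x by (rule du)
      show "(\<phi> has_vector_derivative K * exp ((r - a) * x)) (at x)" for x by (rule d\<phi>)
      fix x assume x: "0 < x" "x < t"
      have "norm (exp (x *\<^sub>R (-\<nu>)) * g x) = exp (x * r) * norm (g x)"
        by (simp add: norm_mult r_def)
      also have "\<dots> \<le> exp (x * r) * (K * exp (-a*x))"
        using gb[of x] x by (intro mult_left_mono) auto
      also have "\<dots> = K * exp ((r - a) * x)"
        by (simp add: exp_add[symmetric] algebra_simps)
      finally show "norm (exp (x *\<^sub>R (-\<nu>)) * g x) \<le> K * exp ((r - a) * x)" .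
    qed
  qed
  have u0: "u 0 = f 0" by (simp add: u_def)
  have ft: "f t = exp (t *\<^sub>R \<nu>) * u t"
    by (simp add: u_def mult.assoc[symmetric] exp_add[symmetric])
  have "norm (u t) \<le> norm (f 0) + \<phi> t"
  proof -
    have "norm (u t) \<le> norm (u 0) + norm (u t - u 0)" by (metis norm_triangle_sub add.commute)
    also have "\<dots> \<le> norm (f 0) + (\<phi> t - \<phi> 0)" using bnd u0 by simp
    also have "\<dots> \<le> norm (f 0) + \<phi> t" using K0 ra0 by (simp add: \<phi>_def)
    finally show ?thesis .
  qed
  then have "norm (f t) \<le> exp (-(r*t)) * (norm (f 0) + \<phi> t)"
    by (simp add: ft norm_mult r_def mult.commute[of t] mult_left_mono)
  also have "\<dots> = exp (-(r*t)) * norm (f 0) + K * exp (-a*t) / (r - a)"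
  proof -
    have "exp (-(r*t)) * exp ((r - a) * t) = exp (-a*t)" by (simp add: exp_add[symmetric] algebra_simps)
    then show ?thesis by (simp add: \<phi>_def algebra_simps)
  qed
  also have "\<dots> \<le> exp (-a*t) * norm (f 0) + K * exp (-a*t) / a"
  proof (rule add_mono)
    show "exp (-(r*t)) * norm (f 0) \<le> exp (-a*t) * norm (f 0)"
      using r a t by (intro mult_right_mono) (auto intro: mult_right_mono)
    show "K * exp (-a*t) / (r - a) \<le> K * exp (-a*t) / a"
      using ra a K0 by (intro divide_left_mono) auto
  qed
  also have "\<dots> = (norm (f 0) + K / a) * exp (-a*t)"
    by (simp add: algebra_simps)
  finally show ?thesis .
qed


lemma bl_gentry: "bounded_linear (\<lambda>X::'a::real_normed_vector^'n^'m. X $ i $ j)"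
  using bounded_linear_compose[OF bounded_linear_vec_nth bounded_linear_vec_nth] .

lemma cscale_entry: "((r::real) *\<^sub>R (X::complex^'n^'m)) $ i $ j = complex_of_real r * X $ i $ j"
  by (simp only: vector_scaleR_component) (simp add: scaleR_conv_of_real)

lemma complexify_scaleR': "complexify (r *\<^sub>R (X::real^'n^'m)) = r *\<^sub>R complexify X"
  by (simp add: complexify_def vec_eq_iff) (simp add: scaleR_conv_of_real)

lemma bl_complexify: "bounded_linear (complexify :: real^'n^'m \<Rightarrow> complex^'n^'m)"
  by (rule linear_conv_bounded_linear[THEN iffD1], rule linearI)
     (simp_all add: complexify_add complexify_scaleR')

lemma bl_cmult_left: "bounded_linear (\<lambda>X::complex^'n^'k. (L::complex^'k^'m) ** X)"
  by (rule linear_conv_bounded_linear[THEN iffD1], rule linearI)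
     (simp_all add: matrix_add_ldistrib vec_eq_iff cscale_entry, simp_all add: matrix_matrix_mult_def cscale_entry sum_distrib_left mult_ac scaleR_sum_right)

lemma Ec_deriv:
  "((\<lambda>t. complexify (mexp (t *\<^sub>R M))) has_vector_derivative complexify M ** complexify (mexp (t *\<^sub>R M))) (at t)"
  using bounded_linear.has_vector_derivative[OF bl_complexify mexp_has_derivative[of M t UNIV]]
  by (simp add: complexify_mult)

lemma F_deriv:
  "((\<lambda>t. L ** complexify (mexp (t *\<^sub>R M))) has_vector_derivative L ** (complexify M ** complexify (mexp (t *\<^sub>R M)))) (at t)"
  by (rule bounded_linear.has_vector_derivative[OF bl_cmult_left Ec_deriv])

lemma lprod_commute0: "lprod N ws ** N = N ** lprod N ws"
  using lprod_commute[of N ws 0] by simp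

lemma F_entry_deriv:
  fixes M :: "real^'n^'n"
  defines "Mc \<equiv> complexify M"
  shows "((\<lambda>t. (lprod Mc ws ** complexify (mexp (t *\<^sub>R M))) $ i $ j) has_vector_derivative
     \<nu> * (lprod Mc ws ** complexify (mexp (t *\<^sub>R M))) $ i $ j + (lprod Mc (\<nu> # ws) ** complexify (mexp (t *\<^sub>R M))) $ i $ j) (at t)"
proof -
  let ?E = "complexify (mexp (t *\<^sub>R M))"
  have "((\<lambda>t. (lprod Mc ws ** complexify (mexp (t *\<^sub>R M))) $ i $ j) has_vector_derivative
      (lprod Mc ws ** (Mc ** ?E)) $ i $ j) (at t)"
    using bounded_linear.has_vector_derivative[OF bl_gentry F_deriv[of "lprod Mc ws" M t], of i j]
    by (simp add: Mc_def)
  moreover have "lprod Mc ws ** (Mc ** ?E) = Mc ** (lprod Mc ws ** ?E)"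
    by (simp add: matrix_mul_assoc lprod_commute0)
  moreover have "(Mc ** (lprod Mc ws ** ?E)) $ i $ j = \<nu> * (lprod Mc ws ** ?E) $ i $ j + (lprod Mc (\<nu> # ws) ** ?E) $ i $ j"
  proof -
    have "lprod Mc (\<nu> # ws) ** ?E = Mc ** (lprod Mc ws ** ?E) - mat \<nu> ** (lprod Mc ws ** ?E)"
      by (simp add: matrix_mul_assoc gmat_diff_rdist)
    then show ?thesis by (simp add: mat_scal_left)
  qed
  ultimately show ?thesis by simp
qed

lemma abscissa_decays:
  fixes M :: "real^'n^'n"
  assumes "spectral_abscissa M < 0"
  shows "decays M"
proof -
  define Mc where "Mc = complexify M"
  obtain \<nu>s where nus: "eigenvalues M = set \<nu>s" "\<nu>s \<noteq> []" "lprod Mc \<nu>s = 0"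
    using eig_struct[of M] unfolding Mc_def by blast
  have neg: "Re \<nu> < 0" if "\<nu> \<in> set \<nu>s" for \<nu>
    using assms nus(1) that abscissa_neg_iff by blast
  define a where "a = Min ((\<lambda>\<nu>. - Re \<nu>) ` set \<nu>s) / 2"
  have fin: "finite ((\<lambda>\<nu>. - Re \<nu>) ` set \<nu>s)" "(\<lambda>\<nu>. - Re \<nu>) ` set \<nu>s \<noteq> {}"
    using nus(2) by auto
  have "0 < Min ((\<lambda>\<nu>. - Re \<nu>) ` set \<nu>s)" using neg by (subst Min_gr_iff[OF fin]) auto
  then have a: "a > 0" unfolding a_def by simp
  have nu2a: "Re \<nu> \<le> -2*a" if "\<nu> \<in> set \<nu>s" for \<nu>
  proof -
    have "Min ((\<lambda>\<nu>. - Re \<nu>) ` set \<nu>s) \<le> - Re \<nu>" using that fin by (intro Min_le) auto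
    then show ?thesis unfolding a_def by linarith
  qed
  define F where "F ws t = lprod Mc ws ** complexify (mexp (t *\<^sub>R M))" for ws t
  have claim: "\<exists>K. \<forall>t\<ge>0. \<forall>i j. norm (F (drop k \<nu>s) t $ i $ j) \<le> K * exp (-a*t)"
    if "k \<le> length \<nu>s" for k
    using that
  proof (induction k)
    case 0
    show ?case by (rule exI[of _ 0]) (simp add: F_def nus(3))
  next
    case (Suc k)
    then obtain K where K: "\<And>t i j. t \<ge> 0 \<Longrightarrow> norm (F (drop k \<nu>s) t $ i $ j) \<le> K * exp (-a*t)"
      by auto
    have kl: "k < length \<nu>s" using Suc.prems by simp
    define \<nu> where "\<nu> = \<nu>s ! k"
    define ws where "ws = drop (Suc k) \<nu>s"
    have dk: "drop k \<nu>s = \<nu> # ws" unfolding \<nu>_def ws_def using kl by (rule Cons_nth_drop_Suc[symmetric])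
    have nu: "Re \<nu> \<le> -2*a" unfolding \<nu>_def by (rule nu2a[OF nth_mem[OF kl]])
    define K' where "K' = (\<Sum>i\<in>UNIV. \<Sum>j\<in>UNIV. norm (F ws 0 $ i $ j)) + K / a"
    show ?case
    proof (intro exI[of _ K'] allI impI)
      fix t :: real and i j assume t: "t \<ge> 0"
      have "norm (F ws t $ i $ j) \<le> (norm (F ws 0 $ i $ j) + K / a) * exp (-a*t)"
      proof (rule ode_bound[OF a nu _ _ t])
        show "((\<lambda>t. F ws t $ i $ j) has_vector_derivative \<nu> * F ws s $ i $ j + F (\<nu> # ws) s $ i $ j) (at s)" for s
          unfolding F_def Mc_def by (rule F_entry_deriv)
        show "norm (F (\<nu> # ws) s $ i $ j) \<le> K * exp (-a * s)" if "s \<ge> 0" for s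
          using K[OF that, of i j] dk by simp
      qed
      also have "\<dots> \<le> K' * exp (-a*t)"
      proof (rule mult_right_mono)
        have "norm (F ws 0 $ i $ j) \<le> (\<Sum>j\<in>UNIV. norm (F ws 0 $ i $ j))"
          by (rule member_le_sum) auto
        also have "\<dots> \<le> (\<Sum>i\<in>UNIV. \<Sum>j\<in>UNIV. norm (F ws 0 $ i $ j))"
          by (rule member_le_sum[where f="\<lambda>i. \<Sum>j\<in>UNIV. norm (F ws 0 $ i $ j)"]) (auto intro: sum_nonneg)
        finally show "norm (F ws 0 $ i $ j) + K / a \<le> K'" unfolding K'_def by simp
      qed simp
      finally show "norm (F (drop (Suc k) \<nu>s) t $ i $ j) \<le> K' * exp (-a*t)" by (simp add: ws_def)
    qed
  qed
  obtain K where K: "\<And>t i j. t \<ge> 0 \<Longrightarrow> norm (F [] t $ i $ j) \<le> K * exp (-a*t)"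
    using claim[of "length \<nu>s"] by auto
  define C where "C = real CARD('n) * real CARD('n) * K"
  have bound: "\<forall>t\<ge>0. norm (mexp (t *\<^sub>R M)) \<le> C * exp (-a*t)"
  proof (intro allI impI)
    fix t :: real assume t: "t \<ge> 0"
    have e: "\<bar>mexp (t *\<^sub>R M) $ i $ j\<bar> \<le> K * exp (-a*t)" for i j
      using K[OF t, of i j] by (simp add: F_def complexify_def)
    have "norm (mexp (t *\<^sub>R M)) \<le> mu (mexp (t *\<^sub>R M))" by (rule norm_le_mu)
    also have "\<dots> \<le> (\<Sum>i\<in>(UNIV::'n set). \<Sum>j\<in>(UNIV::'n set). K * exp (-a*t))"
      unfolding mu_def by (intro sum_mono e)
    also have "\<dots> = C * exp (-a*t)" by (simp add: C_def)
    finally show "norm (mexp (t *\<^sub>R M)) \<le> C * exp (-a*t)" .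
  qed
  show ?thesis unfolding decays_def using a bound by blast
qed


lemma bl_mulv_entry: "bounded_linear (\<lambda>X::complex^'n^'m. (X *v v) $ i)"
  by (rule linear_conv_bounded_linear[THEN iffD1], rule linearI)
     (simp_all add: matrix_vector_mult_def sum.distrib ring_distribs cscale_entry,
      simp_all add: scaleR_conv_of_real sum_distrib_left mult_ac)

lemma complexify_mexp_commute:
  "complexify M ** complexify (mexp (t *\<^sub>R M)) = complexify (mexp (t *\<^sub>R M)) ** complexify M"
  by (simp add: complexify_mult[symmetric] mexp_commute)

lemma decays_abscissa:
  fixes M :: "real^'n^'n"
  assumes "decays M"
  shows "spectral_abscissa M < 0"
proof -
  obtain C a where a: "a > 0" and bd: "\<And>t. t \<ge> 0 \<Longrightarrow> norm (mexp (t *\<^sub>R M)) \<le> C * exp (-a*t)"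
    using assms unfolding decays_def by blast
  define Mc where "Mc = complexify M"
  have "Re lam < 0" if lam: "lam \<in> eigenvalues M" for lam
  proof (rule ccontr)
    assume nonneg: "\<not> Re lam < 0"
    obtain v where v: "v \<noteq> 0" "Mc *v v = lam *s v"
      using lam by (auto simp: eigenvalues_is_eig is_eig_def Mc_def)
    obtain i where vi: "v $ i \<noteq> 0" using v(1) by (metis vec_eq_iff zero_index)
    define Ec where "Ec t = complexify (mexp (t *\<^sub>R M))" for t
    define y where "y t = (Ec t *v v) $ i" for t
    have dy: "(y has_vector_derivative lam * y t) (at t)" for t
    proof -
      have "(y has_vector_derivative ((Mc ** Ec t) *v v) $ i) (at t)"
        using bounded_linear.has_vector_derivative[OF bl_mulv_entry Ec_deriv[of M t], of v i]
        unfolding y_def Ec_def Mc_def .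
      moreover have "((Mc ** Ec t) *v v) $ i = lam * y t"
      proof -
        have "(Mc ** Ec t) *v v = (Ec t ** Mc) *v v"
          by (simp add: Ec_def Mc_def complexify_mexp_commute)
        also have "\<dots> = Ec t *v (lam *s v)" by (simp add: matrix_vector_mul_assoc[symmetric] v(2))
        also have "\<dots> = lam *s (Ec t *v v)" by (rule mulv_smult)
        finally show ?thesis by (simp add: y_def)
      qed
      ultimately show ?thesis by simp
    qed
    define z where "z t = exp (t *\<^sub>R (-lam)) * y t" for t
    have dz: "(z has_derivative (\<lambda>h. 0)) (at t within UNIV)" for t
    proof -
      have "(z has_vector_derivative exp (t *\<^sub>R (-lam)) * (lam * y t) + exp (t *\<^sub>R (-lam)) * (-lam) * y t) (at t)"
        unfolding z_def by (rule has_vector_derivative_mult[OF exp_scaleR_has_vector_derivative_right dy])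
      then have "(z has_vector_derivative 0) (at t)" by (simp add: algebra_simps)
      then show ?thesis by (simp add: has_vector_derivative_def)
    qed
    obtain c where "\<forall>t\<in>UNIV. z t = c" using has_derivative_zero_constant[OF convex_UNIV dz] by blast
    then have zc: "z t = z 0" for t by simp
    have y0: "y 0 = v $ i" by (simp add: y_def Ec_def mexp_zero[of M, simplified] complexify_mat1)
    have yt: "y t = exp (t *\<^sub>R lam) * v $ i" for t
    proof -
      have e1: "exp (t *\<^sub>R lam) * exp (t *\<^sub>R (-lam)) = 1"
        by (simp add: exp_minus)
      have "y t = (exp (t *\<^sub>R lam) * exp (t *\<^sub>R (-lam))) * y t" by (simp only: e1) simp
      also have "\<dots> = exp (t *\<^sub>R lam) * z t" by (simp add: z_def mult.assoc)
      also have "\<dots> = exp (t *\<^sub>R lam) * v $ i" using zc[of t] y0 by (simp add: z_def)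
      finally show ?thesis .
    qed
    define V where "V = (\<Sum>k\<in>UNIV. norm (v $ k))"
    have up: "norm (v $ i) \<le> V * (C * exp (-a*t))" if t: "t \<ge> 0" for t
    proof -
      have "norm (v $ i) \<le> exp (t * Re lam) * norm (v $ i)"
        using nonneg t by (simp add: mult_le_cancel_right1)
      also have "\<dots> = norm (y t)" by (simp add: yt norm_mult)
      also have "\<dots> = norm (\<Sum>k\<in>UNIV. Ec t $ i $ k * v $ k)"
        by (simp add: y_def matrix_vector_mult_def)
      also have "\<dots> \<le> (\<Sum>k\<in>UNIV. norm (Ec t $ i $ k * v $ k))" by (rule norm_sum)
      also have "\<dots> \<le> (\<Sum>k\<in>UNIV. norm (mexp (t *\<^sub>R M)) * norm (v $ k))"
      proof (rule sum_mono)
        fix k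
        have "norm (Ec t $ i $ k) = norm (mexp (t *\<^sub>R M) $ i $ k)" by (simp add: Ec_def complexify_def)
        also have "\<dots> \<le> norm (mexp (t *\<^sub>R M) $ i)" by (rule Finite_Cartesian_Product.norm_nth_le)
        also have "\<dots> \<le> norm (mexp (t *\<^sub>R M))" by (rule Finite_Cartesian_Product.norm_nth_le)
        finally show "norm (Ec t $ i $ k * v $ k) \<le> norm (mexp (t *\<^sub>R M)) * norm (v $ k)"
          by (simp add: norm_mult mult_right_mono)
      qed
      also have "\<dots> = norm (mexp (t *\<^sub>R M)) * V" by (simp add: V_def sum_distrib_left)
      also have "\<dots> \<le> (C * exp (-a*t)) * V"
        by (intro mult_right_mono bd t) (simp add: V_def sum_nonneg)
      finally show ?thesis by (simp add: mult.commute)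
    qed
    have "((\<lambda>t. V * (C * exp (-a*t))) \<longlongrightarrow> V * (C * 0)) at_top"
      by (intro tendsto_intros filterlim_compose[OF exp_at_bot]
          filterlim_tendsto_neg_mult_at_bot[OF tendsto_const _ filterlim_ident]) (use a in simp)
    then have "eventually (\<lambda>t. V * (C * exp (-a*t)) < norm (v $ i)) at_top"
      using vi by (intro order_tendstoD(2)) auto
    moreover have "eventually (\<lambda>t. t \<ge> (0::real)) at_top" by (rule eventually_ge_at_top)
    ultimately have "eventually (\<lambda>t. V * (C * exp (-a*t)) < norm (v $ i) \<and> t \<ge> 0) at_top"
      by (rule eventually_conj)
    then obtain t where "V * (C * exp (-a*t)) < norm (v $ i)" "t \<ge> 0"
      unfolding eventually_at_top_linorder by auto
    then show False using up[of t] by simp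
  qed
  then show ?thesis using abscissa_neg_iff by blast
qed


lemma decays_transpose: "decays M \<Longrightarrow> decays (transpose M)"
  unfolding decays_def by (simp add: mexp_transpose[symmetric] norm_transpose)

lemma lyapI_norm:
  assumes a: "a > 0" and bd: "\<forall>t\<ge>0. norm (mexp (t *\<^sub>R M)) \<le> C * exp (-a*t)"
  shows "norm (lyapI M X) \<le> C^2 * norm X / (2*a)"
proof -
  have dec: "decays M" unfolding decays_def using a bd by blast
  have a2: "2*a > 0" using a by simp
  have gi: "(\<lambda>t. C^2 * norm X * exp (-(2*a)*t)) integrable_on {0..}"
    using integrable_cmul[OF integrable_on_exp_minus_to_infinity[OF a2, of 0], of "C^2 * norm X"] by simp
  have gint: "integral {0..} (\<lambda>t. C^2 * norm X * exp (-(2*a)*t)) = C^2 * norm X / (2*a)"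
  proof -
    have "((\<lambda>t. exp (-(2*a)*t)) has_integral exp (-(2*a)*0) / (2*a)) {0..}"
      by (rule has_integral_exp_minus_to_infinity[OF a2])
    then have "((\<lambda>t. (C^2 * norm X) *\<^sub>R exp (-(2*a)*t)) has_integral (C^2 * norm X) *\<^sub>R (exp (-(2*a)*0) / (2*a))) {0..}"
      by (rule has_integral_cmul)
    then have "((\<lambda>t. C^2 * norm X * exp (-(2*a)*t)) has_integral C^2 * norm X / (2*a)) {0..}"
      by simp
    then show ?thesis by (rule integral_unique)
  qed
  have "norm (lyapI M X) \<le> integral {0..} (\<lambda>t. C^2 * norm X * exp (-(2*a)*t))"
    unfolding lyapI_def
    by (rule Henstock_Kurzweil_Integration.integral_norm_bound_integral[OF lyap(1)[OF dec] gi])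
       (rule lyap_integrand_bound[OF bd], simp)
  then show ?thesis using gint by simp
qed

lemma trace_le: "\<bar>trace (A::real^'n^'n)\<bar> \<le> real CARD('n) * norm A"
proof -
  have "\<bar>trace A\<bar> \<le> (\<Sum>i\<in>UNIV. \<bar>A$i$i\<bar>)" unfolding trace_def by (rule sum_abs)
  also have "\<dots> \<le> (\<Sum>i\<in>(UNIV::'n set). norm A)"
  proof (rule sum_mono)
    fix i
    have "\<bar>A$i$i\<bar> \<le> norm (A$i)" by (rule component_le_norm_cart)
    also have "\<dots> \<le> norm A" by (rule Finite_Cartesian_Product.norm_nth_le)
    finally show "\<bar>A$i$i\<bar> \<le> norm A" .
  qed
  finally show ?thesis by simp
qed

lemma trace_mult_le: "\<bar>trace ((A::real^'n^'n) ** B)\<bar> \<le> real CARD('n) * (norm A * norm B)"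
  by (rule order_trans[OF trace_le]) (simp add: norm_mult_le)

lemma trace_add': "trace ((A::real^'n^'n) + B) = trace A + trace B"
  by (simp add: trace_def sum.distrib)

lemma trace_minus': "trace (- (A::real^'n^'n)) = - trace A"
  by (simp add: trace_def sum_negf)

lemma neg_mult: "(- (A::real^'k^'m)) ** (B::real^'n^'k) = - (A ** B)"
  by (simp add: matrix_matrix_mult_def vec_eq_iff sum_negf)

lemma mult_neg: "(A::real^'k^'m) ** (- (B::real^'n^'k)) = - (A ** B)"
  by (simp add: matrix_matrix_mult_def vec_eq_iff sum_negf)

definition Sig :: "real^'n^'n \<Rightarrow> real^'n^'n" where
  "Sig M = lyapI (transpose M) (mat 1)"

lemma Sig_eq: "decays M \<Longrightarrow> M ** Sig M + Sig M ** transpose M = - mat 1"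
  using lyap(2)[OF decays_transpose, of M "mat 1"] by (simp add: Sig_def)

lemma trace_dual:
  assumes "decays M"
  shows "trace Y = - trace ((Y ** M + transpose M ** Y) ** Sig M)"
proof -
  let ?S = "Sig M"
  have "trace Y = trace (Y ** mat 1)" by simp
  also have "\<dots> = - trace (Y ** (M ** ?S + ?S ** transpose M))"
    by (simp only: Sig_eq[OF assms] mult_neg trace_minus' minus_minus)
  also have "\<dots> = - (trace ((Y ** M) ** ?S) + trace (Y ** ?S ** transpose M))"
    by (simp add: matrix_add_ldistrib trace_add' matrix_mul_assoc)
  also have "trace (Y ** ?S ** transpose M) = trace ((transpose M ** Y) ** ?S)"
    by (simp add: trace_mul_sym[of "Y ** ?S"] matrix_mul_assoc)
  also have "- (trace ((Y ** M) ** ?S) + trace ((transpose M ** Y) ** ?S)) = - trace ((Y ** M + transpose M ** Y) ** ?S)"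
    by (simp add: matrix_add_rdist trace_add')
  finally show ?thesis .
qed

lemma trace_lyapI:
  assumes "decays M"
  shows "trace (lyapI M X) = trace (X ** Sig M)"
proof -
  have "trace (lyapI M X) = - trace ((lyapI M X ** M + transpose M ** lyapI M X) ** Sig M)"
    by (rule trace_dual[OF assms])
  also have "lyapI M X ** M + transpose M ** lyapI M X = - X"
    using lyap(2)[OF assms, of X] by (simp add: add.commute)
  finally show ?thesis by (simp only: neg_mult trace_minus' minus_minus)
qed

lemma trace_Sig_perturb:
  assumes d0: "decays M0" and d: "decays (M0 + E)"
  shows "trace (Z ** Sig (M0 + E)) - trace (Z ** Sig M0) =
         trace ((lyapI M0 Z ** E + transpose E ** lyapI M0 Z) ** Sig (M0 + E))"
proof -
  let ?W = "lyapI M0 Z"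
  have w0: "trace ?W = trace (Z ** Sig M0)" by (rule trace_lyapI[OF d0])
  have "trace ?W = - trace ((?W ** (M0 + E) + transpose (M0 + E) ** ?W) ** Sig (M0 + E))"
    by (rule trace_dual[OF d])
  also have "?W ** (M0 + E) + transpose (M0 + E) ** ?W = - Z + (?W ** E + transpose E ** ?W)"
  proof -
    have "transpose (M0 + E) = transpose M0 + transpose E" by (simp add: transpose_def vec_eq_iff)
    then have "?W ** (M0 + E) + transpose (M0 + E) ** ?W = (transpose M0 ** ?W + ?W ** M0) + (?W ** E + transpose E ** ?W)"
      by (simp add: matrix_add_ldistrib matrix_add_rdist algebra_simps)
    also have "transpose M0 ** ?W + ?W ** M0 = - Z" by (rule lyap(2)[OF d0])
    finally show ?thesis .
  qed
  finally have h1: "trace ?W = - trace ((- Z + (?W ** E + transpose E ** ?W)) ** Sig (M0 + E))" .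
  have eq: "(- Z + (?W ** E + transpose E ** ?W)) ** Sig (M0 + E) = - (Z ** Sig (M0 + E)) + (?W ** E + transpose E ** ?W) ** Sig (M0 + E)"
    by (simp only: matrix_add_rdist neg_mult)
  have h2: "trace ((- Z + (?W ** E + transpose E ** ?W)) ** Sig (M0 + E)) = - trace (Z ** Sig (M0 + E)) + trace ((?W ** E + transpose E ** ?W) ** Sig (M0 + E))"
    unfolding eq by (simp only: trace_add' trace_minus')
  have "trace ?W = trace (Z ** Sig (M0 + E)) - trace ((?W ** E + transpose E ** ?W) ** Sig (M0 + E))"
    using h1 h2 by linarith
  then show ?thesis using w0 by simp
qed


lemma norm_mulv_le: "norm ((A::real^'n^'m) *v x) \<le> norm A * norm x"
proof -
  have "norm (A *v x)^2 = (\<Sum>i\<in>UNIV. (A$i \<bullet> x)^2)"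
    by (simp add: norm_vec_sq matrix_vector_mul_component)
  also have "\<dots> \<le> (\<Sum>i\<in>UNIV. norm (A$i)^2 * norm x^2)"
  proof (rule sum_mono)
    fix i
    have "\<bar>A$i \<bullet> x\<bar> \<le> norm (A$i) * norm x" by (rule Cauchy_Schwarz_ineq2)
    then have "\<bar>A$i \<bullet> x\<bar>^2 \<le> (norm (A$i) * norm x)^2" by (intro power_mono) auto
    then show "(A$i \<bullet> x)^2 \<le> norm (A$i)^2 * norm x^2" by (simp add: power_mult_distrib)
  qed
  also have "\<dots> = (norm A * norm x)^2"
    by (simp add: norm_vec_sq[of A] sum_distrib_right power_mult_distrib)
  finally show ?thesis by (rule power2_le_imp_le) simp
qed

lemma inner_mulv_le: "\<bar>x \<bullet> ((A::real^'n^'n) *v x)\<bar> \<le> norm A * norm x ^ 2"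
proof -
  have "\<bar>x \<bullet> (A *v x)\<bar> \<le> norm x * norm (A *v x)" by (rule Cauchy_Schwarz_ineq2)
  also have "\<dots> \<le> norm x * (norm A * norm x)" by (intro mult_left_mono norm_mulv_le) auto
  finally show ?thesis by (simp add: power2_eq_square mult_ac)
qed

lemma bl_mulv: "bounded_linear (\<lambda>X::real^'n^'m. X *v x)"
  by (rule linear_conv_bounded_linear[THEN iffD1], rule linearI)
     (simp_all add: matrix_vector_mult_def vec_eq_iff scaleR_sum_right ring_distribs sum.distrib sum_distrib_left mult_ac)

lemma traj_deriv:
  "((\<lambda>t. mexp (t *\<^sub>R M) *v x) has_vector_derivative M *v (mexp (t *\<^sub>R M) *v x)) (at t within S)"
  using bounded_linear.has_vector_derivative[OF bl_mulv mexp_has_derivative[of M t S], of x]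
  by (simp add: matrix_vector_mul_assoc)

lemma growth:
  fixes f f' :: "real \<Rightarrow> real"
  assumes df: "\<And>t. t \<ge> 0 \<Longrightarrow> (f has_real_derivative f' t) (at t)"
    and le: "\<And>t. t \<ge> 0 \<Longrightarrow> f' t \<le> c * f t"
    and t: "t \<ge> 0"
  shows "f t \<le> f 0 * exp (c * t)"
proof -
  define h where "h s = f s * exp (- c * s)" for s
  have "h t \<le> h 0"
  proof (rule DERIV_nonpos_imp_nonincreasing[OF t])
    fix x assume x: "0 \<le> x" "x \<le> t"
    have "(h has_real_derivative f' x * exp (- c * x) + f x * (exp (- c * x) * (- c))) (at x)"
      unfolding h_def using df[OF x(1)] by (auto intro!: derivative_eq_intros)
    moreover have "f' x * exp (- c * x) + f x * (exp (- c * x) * (- c)) \<le> 0"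
    proof -
      have "f' x * exp (- c * x) \<le> c * f x * exp (- c * x)"
        by (intro mult_right_mono le x) auto
      then show ?thesis by (simp add: algebra_simps)
    qed
    ultimately show "\<exists>y. (h has_real_derivative y) (at x) \<and> y \<le> 0" by blast
  qed
  then have "f t * exp (- c * t) \<le> f 0" by (simp add: h_def)
  then have "f t * exp (- c * t) * exp (c * t) \<le> f 0 * exp (c * t)"
    by (intro mult_right_mono) auto
  then show ?thesis by (simp add: mult.assoc exp_add[symmetric])
qed

lemma traj_lower:
  fixes M :: "real^'n^'n"
  assumes t: "t \<ge> 0"
  shows "norm y ^ 2 * exp (- (2 * norm M) * t) \<le> norm (mexp (t *\<^sub>R M) *v y) ^ 2"
proof -
  define g where "g s = - ((mexp (s *\<^sub>R M) *v y) \<bullet> (mexp (s *\<^sub>R M) *v y))" for s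
  define g' where "g' s = - ((mexp (s *\<^sub>R M) *v y) \<bullet> (M *v (mexp (s *\<^sub>R M) *v y)) +
                              (M *v (mexp (s *\<^sub>R M) *v y)) \<bullet> (mexp (s *\<^sub>R M) *v y))" for s
  have dg: "(g has_real_derivative g' s) (at s)" for s
  proof -
    have "((\<lambda>s. (mexp (s *\<^sub>R M) *v y) \<bullet> (mexp (s *\<^sub>R M) *v y)) has_vector_derivative
        ((mexp (s *\<^sub>R M) *v y) \<bullet> (M *v (mexp (s *\<^sub>R M) *v y)) + (M *v (mexp (s *\<^sub>R M) *v y)) \<bullet> (mexp (s *\<^sub>R M) *v y))) (at s)"
      by (rule bounded_bilinear.has_vector_derivative[OF bounded_bilinear_inner traj_deriv traj_deriv])
    then have "((\<lambda>s. (mexp (s *\<^sub>R M) *v y) \<bullet> (mexp (s *\<^sub>R M) *v y)) has_real_derivative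
        ((mexp (s *\<^sub>R M) *v y) \<bullet> (M *v (mexp (s *\<^sub>R M) *v y)) + (M *v (mexp (s *\<^sub>R M) *v y)) \<bullet> (mexp (s *\<^sub>R M) *v y))) (at s)"
      by (simp add: has_real_derivative_iff_has_vector_derivative)
    then show ?thesis unfolding g_def g'_def by (rule DERIV_minus)
  qed
  have gle: "g' s \<le> (- (2 * norm M)) * g s" for s
  proof -
    let ?x = "mexp (s *\<^sub>R M) *v y"
    have b: "\<bar>?x \<bullet> (M *v ?x)\<bar> \<le> norm M * norm ?x ^ 2" by (rule inner_mulv_le)
    have e1: "(M *v ?x) \<bullet> ?x = ?x \<bullet> (M *v ?x)" by (rule inner_commute)
    have e2: "?x \<bullet> ?x = norm ?x ^ 2" by (simp add: power2_norm_eq_inner)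
    have e3: "(- (2 * norm M)) * (- (norm ?x ^ 2)) = 2 * (norm M * norm ?x ^ 2)" by simp
    have "g' s = - (2 * (?x \<bullet> (M *v ?x)))" unfolding g'_def e1 by simp
    moreover have "g s = - (norm ?x ^ 2)" unfolding g_def e2 by simp
    ultimately show ?thesis using b e3 by (simp only:)
  qed
  have "g t \<le> g 0 * exp ((- (2 * norm M)) * t)"
    by (rule growth[OF dg gle t])
  moreover have "g 0 = - (norm y ^ 2)"
    using mexp_zero[of M] by (simp add: g_def power2_norm_eq_inner)
  moreover have "g t = - (norm (mexp (t *\<^sub>R M) *v y) ^ 2)" by (simp add: g_def power2_norm_eq_inner)
  ultimately show ?thesis by simp
qed

lemma norm_cols: "norm (A::real^'n^'m)^2 = (\<Sum>j\<in>UNIV. norm (A *v axis j 1)^2)"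
proof -
  have c: "(A *v axis j 1) $ i = A $ i $ j" for i j
    by (simp add: matrix_vector_mul_component inner_axis)
  show ?thesis unfolding norm_mat_sq norm_vec_sq c real_norm_def power2_abs
    by (rule sum.swap)
qed

lemma quad_transpose: "y \<bullet> ((transpose A ** A) *v y) = norm ((A::real^'n^'n) *v y) ^ 2"
proof -
  have "y \<bullet> ((transpose A ** A) *v y) = y \<bullet> (transpose A *v (A *v y))"
    by (simp add: matrix_vector_mul_assoc)
  also have "\<dots> = (A *v y) \<bullet> (A *v y)"
    by (simp add: transpose_matrix_vector inner_commute[of y] dot_lmul_matrix)
  finally show ?thesis by (simp add: power2_norm_eq_inner)
qed

lemma lyap_P_lower:
  fixes M0 :: "real^'n^'n"
  assumes dec: "decays M0"
  shows "norm y ^ 2 / (2 * norm M0 + 1) \<le> y \<bullet> (lyapI M0 (mat 1) *v y)"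
proof -
  define c0 where "c0 = 2 * norm M0 + 1"
  have c0: "c0 > 0" by (simp add: c0_def add_nonneg_pos)
  let ?f = "\<lambda>t. transpose (mexp (t *\<^sub>R M0)) ** mat 1 ** mexp (t *\<^sub>R M0)"
  have fi: "?f integrable_on {0..}" by (rule lyap(1)[OF dec])
  have blq: "bounded_linear (\<lambda>X::real^'n^'n. y \<bullet> (X *v y))"
    by (rule bounded_linear_compose[OF bounded_linear_inner_right bl_mulv])
  have "y \<bullet> (lyapI M0 (mat 1) *v y) = integral {0..} (\<lambda>t. y \<bullet> (?f t *v y))"
    unfolding lyapI_def using integral_linear[OF fi blq] by (simp add: o_def)
  also have "\<dots> = integral {0..} (\<lambda>t. norm (mexp (t *\<^sub>R M0) *v y) ^ 2)"
    by (simp add: quad_transpose)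
  finally have eq: "y \<bullet> (lyapI M0 (mat 1) *v y) = integral {0..} (\<lambda>t. norm (mexp (t *\<^sub>R M0) *v y) ^ 2)" .
  have i1: "(\<lambda>t. norm (mexp (t *\<^sub>R M0) *v y) ^ 2) integrable_on {0..}"
    using integrable_linear[OF fi blq] by (simp add: o_def quad_transpose)
  have hi: "((\<lambda>t. (norm y ^ 2) *\<^sub>R exp (-c0*t)) has_integral (norm y ^ 2) *\<^sub>R (exp (-c0*0) / c0)) {0..}"
    by (rule has_integral_cmul[OF has_integral_exp_minus_to_infinity[OF c0]])
  then have hi': "((\<lambda>t. norm y ^ 2 * exp (-c0*t)) has_integral norm y ^ 2 / c0) {0..}" by simp
  have "norm y ^ 2 / c0 = integral {0..} (\<lambda>t. norm y ^ 2 * exp (-c0*t))"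
    using integral_unique[OF hi'] by simp
  also have "\<dots> \<le> integral {0..} (\<lambda>t. norm (mexp (t *\<^sub>R M0) *v y) ^ 2)"
  proof (rule integral_le)
    show "(\<lambda>t. norm y ^ 2 * exp (-c0*t)) integrable_on {0..}" using hi' by blast
    show "(\<lambda>t. norm (mexp (t *\<^sub>R M0) *v y) ^ 2) integrable_on {0..}" by (rule i1)
    fix t :: real assume "t \<in> {0..}"
    then have t: "t \<ge> 0" by simp
    have "norm y ^ 2 * exp (-c0*t) \<le> norm y ^ 2 * exp (- (2 * norm M0) * t)"
      using t by (intro mult_left_mono) (auto simp: c0_def algebra_simps)
    also have "\<dots> \<le> norm (mexp (t *\<^sub>R M0) *v y) ^ 2" by (rule traj_lower[OF t])
    finally show "norm y ^ 2 * exp (-c0*t) \<le> norm (mexp (t *\<^sub>R M0) *v y) ^ 2" .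
  qed
  finally show ?thesis using eq by (simp add: c0_def)
qed


lemma transpose_add: "transpose ((A::real^'n^'m) + B) = transpose A + transpose B"
  by (simp add: transpose_def vec_eq_iff)

lemma neg_mulv: "(- (A::real^'n^'m)) *v v = - (A *v v)"
  by (simp add: matrix_vector_mult_def vec_eq_iff sum_negf)

lemma uniform_decay:
  fixes M0 :: "real^'n^'n"
  assumes dec: "decays M0"
  shows "\<exists>\<delta>>0. \<exists>C a. a > 0 \<and> (\<forall>E. norm E \<le> \<delta> \<longrightarrow> (\<forall>t\<ge>0. norm (mexp (t *\<^sub>R (M0 + E))) \<le> C * exp (-a*t)))"
proof -
  define P where "P = lyapI M0 (mat 1)"
  have lyP: "transpose M0 ** P + P ** M0 = - mat 1" unfolding P_def by (rule lyap(2)[OF dec])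
  define c0 where "c0 = 2 * norm M0 + 1"
  have c0: "c0 > 0" by (simp add: c0_def add_nonneg_pos)
  have low: "norm y ^ 2 \<le> c0 * (y \<bullet> (P *v y))" for y
    using lyap_P_lower[OF dec, of y] c0 by (simp add: P_def c0_def field_simps)
  define p where "p = norm P + 1"
  have p: "p > 0" by (simp add: p_def add_nonneg_pos)
  have up: "y \<bullet> (P *v y) \<le> p * norm y ^ 2" for y
  proof -
    have "y \<bullet> (P *v y) \<le> norm P * norm y ^ 2" using inner_mulv_le[of y P] by linarith
    also have "\<dots> \<le> p * norm y ^ 2" by (intro mult_right_mono) (auto simp: p_def)
    finally show ?thesis .
  qed
  define \<delta> where "\<delta> = 1 / (4 * p)"
  have \<delta>: "\<delta> > 0" using p by (simp add: \<delta>_def)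
  define a where "a = 1 / (4 * p)"
  have a: "a > 0" using p by (simp add: a_def)
  define C where "C = sqrt (real CARD('n) * c0 * p)"
  have key: "norm (mexp (t *\<^sub>R (M0 + E))) \<le> C * exp (-a*t)" if E: "norm E \<le> \<delta>" and t: "t \<ge> 0" for E t
  proof -
    define M where "M = M0 + E"
    define Z where "Z = transpose E ** P + P ** E"
    have MZ: "transpose M ** P + P ** M = - mat 1 + Z"
    proof -
      have "transpose M ** P + P ** M = (transpose M0 ** P + P ** M0) + Z"
        by (simp add: M_def Z_def transpose_add matrix_add_rdist matrix_add_ldistrib algebra_simps)
      then show ?thesis using lyP by simp
    qed
    have nZ: "norm Z \<le> 1/2"
    proof -
      have "norm Z \<le> norm (transpose E ** P) + norm (P ** E)" unfolding Z_def by (rule norm_triangle_ineq)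
      also have "\<dots> \<le> norm E * norm P + norm P * norm E"
        using norm_mult_le[of "transpose E" P] norm_mult_le[of P E]
        by (simp add: norm_transpose mult.commute[of "norm P" "norm E"])
      also have "\<dots> = 2 * norm E * norm P" by simp
      also have "\<dots> \<le> 2 * \<delta> * p"
        using E \<delta> by (intro mult_mono) (auto simp: p_def)
      also have "\<dots> = 1/2" using p by (simp add: \<delta>_def)
      finally show ?thesis .
    qed
    have traj: "norm (mexp (t *\<^sub>R M) *v x0) ^ 2 \<le> c0 * p * norm x0 ^ 2 * exp (-(2*a)*t)" for x0
    proof -
      define x where "x s = mexp (s *\<^sub>R M) *v x0" for s
      define V where "V s = x s \<bullet> (P *v x s)" for s
      define V' where "V' s = x s \<bullet> (P *v (M *v x s)) + (M *v x s) \<bullet> (P *v x s)" for s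
      have dV: "(V has_real_derivative V' s) (at s)" for s
      proof -
        have dx: "(x has_vector_derivative M *v x s) (at s)" unfolding x_def by (rule traj_deriv)
        have dPx: "((\<lambda>s. P *v x s) has_vector_derivative P *v (M *v x s)) (at s)"
          by (rule bounded_linear.has_vector_derivative[OF matrix_vector_mul_bounded_linear dx])
        have "(V has_vector_derivative V' s) (at s)"
          unfolding V_def V'_def by (rule bounded_bilinear.has_vector_derivative[OF bounded_bilinear_inner dx dPx])
        then show ?thesis by (simp add: has_real_derivative_iff_has_vector_derivative)
      qed
      have V'eq: "V' s = x s \<bullet> ((transpose M ** P + P ** M) *v x s)" for s
      proof -
        have "(M *v x s) \<bullet> (P *v x s) = x s \<bullet> ((transpose M ** P) *v x s)"
          by (simp add: matrix_vector_mul_assoc[symmetric] transpose_matrix_vector inner_commute[of "x s"] dot_lmul_matrix)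
             (rule inner_commute)
        moreover have "x s \<bullet> (P *v (M *v x s)) = x s \<bullet> ((P ** M) *v x s)"
          by (simp add: matrix_vector_mul_assoc)
        ultimately show ?thesis
          by (simp add: V'_def matrix_vector_mult_add_rdistrib inner_add_right)
      qed
      have V'le: "V' s \<le> (- (1 / (2*p))) * V s" for s
      proof -
        have "V' s = x s \<bullet> ((- mat 1 + Z) *v x s)" using V'eq MZ by simp
        also have "\<dots> = - (x s \<bullet> x s) + x s \<bullet> (Z *v x s)"
          by (simp only: matrix_vector_mult_add_rdistrib inner_add_right neg_mulv matrix_vector_mul_lid inner_minus_right)
        also have "\<dots> \<le> - (norm (x s) ^ 2) + (1/2) * norm (x s) ^ 2"
        proof -
          have "x s \<bullet> (Z *v x s) \<le> norm Z * norm (x s) ^ 2" using inner_mulv_le[of "x s" Z] by linarith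
          also have "\<dots> \<le> (1/2) * norm (x s) ^ 2" by (intro mult_right_mono nZ) auto
          finally show ?thesis by (simp add: power2_norm_eq_inner)
        qed
        also have "\<dots> = - (norm (x s) ^ 2 / 2)" by simp
        also have "\<dots> \<le> - (V s / (2*p))"
        proof -
          have "V s \<le> p * norm (x s) ^ 2" unfolding V_def by (rule up)
          then have "V s / (2*p) \<le> norm (x s) ^ 2 / 2" using p by (simp add: field_simps)
          then show ?thesis by simp
        qed
        finally show ?thesis by simp
      qed
      have "V t \<le> V 0 * exp ((- (1 / (2*p))) * t)"
        by (rule growth[OF dV V'le t])
      moreover have "V 0 \<le> p * norm x0 ^ 2"
        using up[of x0] mexp_zero[of M] by (simp add: V_def x_def)
      moreover have "norm (x t) ^ 2 \<le> c0 * V t" unfolding V_def by (rule low)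
      ultimately have "norm (x t) ^ 2 \<le> c0 * (p * norm x0 ^ 2 * exp ((- (1 / (2*p))) * t))"
        using c0 by (smt (verit) exp_gt_zero mult_left_mono mult_right_mono)
      moreover have "(- (1 / (2*p))) * t = -(2*a)*t" using p by (simp add: a_def field_simps)
      ultimately show ?thesis by (simp add: x_def mult_ac)
    qed
    have "norm (mexp (t *\<^sub>R M)) ^ 2 = (\<Sum>j\<in>UNIV. norm (mexp (t *\<^sub>R M) *v axis j 1) ^ 2)"
      by (rule norm_cols)
    also have "\<dots> \<le> (\<Sum>j\<in>(UNIV::'n set). c0 * p * exp (-(2*a)*t))"
      by (rule sum_mono) (use traj[of "axis _ 1"] in \<open>simp add: norm_axis_1\<close>)
    also have "\<dots> = (C * exp (-a*t)) ^ 2"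
    proof -
      have "(C * exp (-a*t)) ^ 2 = C^2 * (exp (-a*t))^2" by (simp add: power_mult_distrib)
      also have "C^2 = real CARD('n) * c0 * p" unfolding C_def using c0 p by simp
      also have "(exp (-a*t))^2 = exp (-(2*a)*t)" by (simp add: power2_eq_square exp_add[symmetric] algebra_simps)
      finally show ?thesis by simp
    qed
    finally have "norm (mexp (t *\<^sub>R M)) ^ 2 \<le> (C * exp (-a*t)) ^ 2" .
    then show ?thesis unfolding M_def
      by (rule power2_le_imp_le) (use c0 p in \<open>simp add: C_def\<close>)
  qed
  show ?thesis using \<delta> a key by blast
qed


lemma trace_scaleR: "trace (c *\<^sub>R (A::real^'n^'n)) = c * trace A"
  by (simp add: trace_def sum_distrib_left)

lemma cost_eq:
  assumes "decays (A + B ** U)"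
  shows "lqr_cost A B Q R U = trace ((Q + transpose U ** R ** U) ** Sig (A + B ** U))"
  unfolding lqr_cost_lyapI by (rule trace_lyapI[OF assms])

definition Hl :: "real^'d^'d \<Rightarrow> real^'p^'d \<Rightarrow> real^'d^'d \<Rightarrow> real^'p^'p \<Rightarrow> real^'d^'p \<Rightarrow> real^'d^'p \<Rightarrow> real^'d^'d" where
  "Hl A B Q R U0 D = transpose D ** R ** U0 + transpose U0 ** R ** D
     + lyapI (A + B ** U0) (Q + transpose U0 ** R ** U0) ** (B ** D)
     + transpose (B ** D) ** lyapI (A + B ** U0) (Q + transpose U0 ** R ** U0)"

lemma Hl_scale: "Hl A B Q R U0 (c *\<^sub>R D) = c *\<^sub>R Hl A B Q R U0 D"
  by (simp add: Hl_def transpose_scalar mult_scaleR_left mult_scaleR_right scaleR_add_right)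

lemma quad_scale: "transpose (c *\<^sub>R D) ** R ** (c *\<^sub>R D) = c^2 *\<^sub>R (transpose (D::real^'d^'p) ** (R::real^'p^'p) ** D)"
  by (simp add: transpose_scalar mult_scaleR_left mult_scaleR_right power2_eq_square)

lemma diff_formula:
  fixes A :: "real^'d^'d" and B :: "real^'p^'d" and Q :: "real^'d^'d" and R :: "real^'p^'p"
    and U0 D :: "real^'d^'p"
  assumes d0: "decays (A + B ** U0)" and d1: "decays (A + B ** U0 + B ** D)"
  shows "lqr_cost A B Q R (U0 + D) - lqr_cost A B Q R U0 =
         trace ((transpose D ** R ** D + Hl A B Q R U0 D) ** Sig (A + B ** U0 + B ** D))"
proof -
  define M0 where "M0 = A + B ** U0"
  define E where "E = B ** D"
  define X0 where "X0 = Q + transpose U0 ** R ** U0"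
  define XU where "XU = Q + transpose (U0 + D) ** R ** (U0 + D)"
  define P0 where "P0 = lyapI M0 X0"
  define S where "S = Sig (M0 + E)"
  have MU: "A + B ** (U0 + D) = M0 + E" by (simp add: M0_def E_def matrix_add_ldistrib add.assoc)
  have c1: "lqr_cost A B Q R (U0 + D) = trace (XU ** S)"
    using cost_eq[of A B "U0 + D" Q R] d1 unfolding MU XU_def S_def
    by (simp add: M0_def E_def)
  have c0: "lqr_cost A B Q R U0 = trace (X0 ** Sig M0)"
    using cost_eq[OF d0, of Q R] by (simp add: X0_def M0_def)
  have pert: "trace (X0 ** S) - trace (X0 ** Sig M0) = trace ((P0 ** E + transpose E ** P0) ** S)"
    unfolding S_def P0_def
    by (rule trace_Sig_perturb) (use d0 d1 in \<open>simp_all add: M0_def E_def\<close>)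
  have XU: "XU - X0 = transpose D ** R ** D + transpose D ** R ** U0 + transpose U0 ** R ** D"
    by (simp add: XU_def X0_def transpose_add matrix_add_ldistrib matrix_add_rdist algebra_simps)
  have H: "Hl A B Q R U0 D = transpose D ** R ** U0 + transpose U0 ** R ** D + P0 ** E + transpose E ** P0"
    by (simp add: Hl_def P0_def M0_def X0_def E_def)
  have "lqr_cost A B Q R (U0 + D) - lqr_cost A B Q R U0 = trace (XU ** S) - trace (X0 ** S) + trace ((P0 ** E + transpose E ** P0) ** S)"
    using c1 c0 pert by linarith
  also have "\<dots> = trace ((XU - X0 + (P0 ** E + transpose E ** P0)) ** S)"
    by (simp add: matrix_add_rdist matrix_diff_rdist trace_add' trace_sub)
  also have "XU - X0 + (P0 ** E + transpose E ** P0) = transpose D ** R ** D + Hl A B Q R U0 D"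
    unfolding XU H by (simp add: algebra_simps)
  finally show ?thesis by (simp add: S_def M0_def E_def add.assoc)
qed

lemma frob_le_spec: "norm (A::real^'n^'m) \<le> sqrt (real CARD('n)) * spec_norm A"
proof -
  have bl: "bounded_linear (\<lambda>x. A *v x)" by simp
  have "norm A ^ 2 = (\<Sum>j\<in>UNIV. norm (A *v axis j 1) ^ 2)" by (rule norm_cols)
  also have "\<dots> \<le> (\<Sum>j\<in>(UNIV::'n set). spec_norm A ^ 2)"
  proof (rule sum_mono)
    fix j :: 'n
    have "norm (A *v axis j 1) \<le> onorm (\<lambda>x. A *v x) * norm (axis j (1::real))"
      by (rule onorm[OF bl])
    then have "norm (A *v axis j 1) \<le> spec_norm A" by (simp add: spec_norm_def)
    then show "norm (A *v axis j 1) ^ 2 \<le> spec_norm A ^ 2" by (intro power_mono) auto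
  qed
  also have "\<dots> = (sqrt (real CARD('n)) * spec_norm A) ^ 2"
    by (simp add: power_mult_distrib)
  finally show ?thesis
    by (rule power2_le_imp_le) (simp add: spec_norm_def onorm_pos_le[OF bl])
qed


lemma expansion:
  fixes A :: "real^'d^'d" and B :: "real^'p^'d" and Q :: "real^'d^'d" and R :: "real^'p^'p"
    and U0 V :: "real^'d^'p"
  assumes d0: "decays (A + B ** U0)" and d1: "decays (A + B ** U0 + B ** (c *\<^sub>R V))"
  shows "lqr_cost A B Q R (U0 + c *\<^sub>R V) - lqr_cost A B Q R U0 =
    c^2 * trace ((transpose V ** R ** V) ** Sig (A + B ** U0 + B ** (c *\<^sub>R V)))
    + c * trace (Hl A B Q R U0 V ** Sig (A + B ** U0))
    + c * trace ((lyapI (A + B ** U0) (Hl A B Q R U0 V) ** (B ** (c *\<^sub>R V))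
        + transpose (B ** (c *\<^sub>R V)) ** lyapI (A + B ** U0) (Hl A B Q R U0 V)) ** Sig (A + B ** U0 + B ** (c *\<^sub>R V)))"
proof -
  define S where "S = Sig (A + B ** U0 + B ** (c *\<^sub>R V))"
  define H where "H = Hl A B Q R U0 V"
  define W where "W = lyapI (A + B ** U0) H"
  define E where "E = B ** (c *\<^sub>R V)"
  have "lqr_cost A B Q R (U0 + c *\<^sub>R V) - lqr_cost A B Q R U0 =
        trace ((transpose (c *\<^sub>R V) ** R ** (c *\<^sub>R V) + Hl A B Q R U0 (c *\<^sub>R V)) ** S)"
    unfolding S_def by (rule diff_formula[OF d0 d1])
  also have "\<dots> = c^2 * trace ((transpose V ** R ** V) ** S) + c * trace (H ** S)"
    by (simp add: quad_scale Hl_scale H_def matrix_add_rdist trace_add' mult_scaleR_left trace_scaleR)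
  also have "trace (H ** S) = trace (H ** Sig (A + B ** U0)) + trace ((W ** E + transpose E ** W) ** S)"
  proof -
    have "trace (H ** Sig (A + B ** U0 + E)) - trace (H ** Sig (A + B ** U0)) =
          trace ((lyapI (A + B ** U0) H ** E + transpose E ** lyapI (A + B ** U0) H) ** Sig (A + B ** U0 + E))"
      by (rule trace_Sig_perturb[OF d0]) (use d1 in \<open>simp add: E_def\<close>)
    then show ?thesis by (simp add: S_def W_def E_def)
  qed
  finally show ?thesis by (simp add: S_def H_def W_def E_def algebra_simps)
qed

lemma first_order_real:
  fixes h K e1 :: real
  assumes e1: "e1 > 0" and K: "K \<ge> 0"
    and le: "\<And>c. \<bar>c\<bar> \<le> e1 \<Longrightarrow> 0 \<le> c * h + c^2 * K"
  shows "h = 0"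
proof (rule ccontr)
  assume h: "h \<noteq> 0"
  define \<eta> where "\<eta> = min e1 (\<bar>h\<bar> / (2 * (K + 1)))"
  have \<eta>: "\<eta> > 0" using e1 h K by (simp add: \<eta>_def)
  define c where "c = (if h > 0 then - \<eta> else \<eta>)"
  have ac: "\<bar>c\<bar> = \<eta>" using \<eta> by (simp add: c_def)
  have ch: "c * h = - (\<eta> * \<bar>h\<bar>)" using h by (auto simp: c_def)
  have "\<bar>c\<bar> \<le> e1" using ac by (simp add: \<eta>_def)
  then have "0 \<le> c * h + c^2 * K" by (rule le)
  moreover have "c^2 * K = \<eta> * (\<eta> * K)" using ac by (metis power2_abs power2_eq_square mult.assoc)
  moreover have "\<eta> * K \<le> \<bar>h\<bar> / 2"
  proof -
    have "\<eta> * K \<le> (\<bar>h\<bar> / (2 * (K + 1))) * K" using K \<eta> by (intro mult_right_mono) (auto simp: \<eta>_def)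
    also have "\<dots> \<le> (\<bar>h\<bar> / (2 * (K + 1))) * (K + 1)" using K by (intro mult_left_mono) auto
    also have "\<dots> = \<bar>h\<bar> / 2" using K by (simp add: field_simps)
    finally show ?thesis .
  qed
  ultimately have "0 \<le> - (\<eta> * \<bar>h\<bar>) + \<eta> * (\<bar>h\<bar> / 2)"
    using \<eta> ch by (smt (verit) mult_left_mono)
  then have "0 \<le> - (\<eta> * \<bar>h\<bar>) / 2" by (simp add: algebra_simps)
  moreover have "\<eta> * \<bar>h\<bar> > 0" using \<eta> h by simp
  ultimately show False by simp
qed


lemma norm_tmt: "norm (transpose (X::real^'a^'b) ** (R::real^'b^'b) ** (Y::real^'c^'b)) \<le> norm X * norm R * norm Y"
  using norm_mult3_le[of "transpose X" R Y] by (simp add: norm_transpose)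

lemma pert_term_bound:
  fixes W E S :: "real^'d^'d"
  shows "\<bar>trace ((W ** E + transpose E ** W) ** S)\<bar> \<le> real CARD('d) * (2 * norm W * norm E) * norm S"
proof -
  have "\<bar>trace ((W ** E + transpose E ** W) ** S)\<bar> \<le> real CARD('d) * (norm (W ** E + transpose E ** W) * norm S)"
    by (rule trace_mult_le)
  also have "norm (W ** E + transpose E ** W) \<le> 2 * norm W * norm E"
  proof -
    have "norm (W ** E + transpose E ** W) \<le> norm (W ** E) + norm (transpose E ** W)" by (rule norm_triangle_ineq)
    also have "\<dots> \<le> norm W * norm E + norm E * norm W"
      using norm_mult_le[of W E] norm_mult_le[of "transpose E" W]
      by (simp add: norm_transpose mult.commute[of "norm W" "norm E"])
    finally show ?thesis by (simp add: mult.commute)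
  qed
  then have "real CARD('d) * (norm (W ** E + transpose E ** W) * norm S) \<le> real CARD('d) * (2 * norm W * norm E * norm S)"
    by (intro mult_left_mono mult_right_mono) auto
  finally show ?thesis by (simp add: mult.assoc)
qed

theorem lemma13:
  fixes A :: "real^'d^'d" and B :: "real^'p^'d" and Q :: "real^'d^'d" and R :: "real^'p^'p"
    and Ustar :: "real^'d^'p"
  assumes "sym_pos_def Q" and "sym_pos_def R"
    and "spectral_abscissa (A + B ** Ustar) < 0"
    and "\<forall>U. spectral_abscissa (A + B ** U) < 0 \<longrightarrow> lqr_cost A B Q R Ustar \<le> lqr_cost A B Q R U"
  shows "\<exists>\<epsilon>0 > 0. \<exists>C1. \<forall>dU :: real^'d^'p. spec_norm dU = 1 \<longrightarrow>
           (\<forall>\<epsilon> \<in> {0..\<epsilon>0}. lqr_cost A B Q R (Ustar + \<epsilon> *\<^sub>R dU) - lqr_cost A B Q R Ustar \<le> C1 * \<epsilon>^2)"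
proof -
  define M0 where "M0 = A + B ** Ustar"
  have dec0: "decays M0" unfolding M0_def by (rule abscissa_decays[OF assms(3)])
  obtain \<delta> C a where \<delta>: "\<delta> > 0" and a: "a > 0"
    and ud: "\<And>E. norm E \<le> \<delta> \<Longrightarrow> \<forall>t\<ge>0. norm (mexp (t *\<^sub>R (M0 + E))) \<le> C * exp (-a*t)"
    using uniform_decay[OF dec0] by blast
  have decE: "decays (M0 + E)" if "norm E \<le> \<delta>" for E
    unfolding decays_def using ud[OF that] a by blast
  define S where "S = C^2 * norm (mat 1 :: real^'d^'d) / (2*a)"
  have Sb: "norm (Sig (M0 + E)) \<le> S" if "norm E \<le> \<delta>" for E
  proof -
    have "\<forall>t\<ge>0. norm (mexp (t *\<^sub>R transpose (M0 + E))) \<le> C * exp (-a*t)"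
      using ud[OF that] by (simp add: mexp_transpose[symmetric] norm_transpose)
    then show ?thesis unfolding Sig_def S_def by (rule lyapI_norm[OF a])
  qed
  have S0: "S \<ge> 0" using a by (simp add: S_def)
  have ud0: "\<forall>t\<ge>0. norm (mexp (t *\<^sub>R M0)) \<le> C * exp (-a*t)"
    using ud[of 0] \<delta> by simp
  define n where "n = real CARD('d)"
  have n0: "n \<ge> 0" by (simp add: n_def)
  have smallE: "norm (B ** (c *\<^sub>R V)) \<le> \<bar>c\<bar> * norm B * norm V" for c and V :: "real^'d^'p"
    using norm_mult_le[of B "c *\<^sub>R V"] by (simp add: mult_ac)
  have FO: "trace (Hl A B Q R Ustar V ** Sig M0) = 0" for V
  proof -
    define e1 where "e1 = \<delta> / (norm B * norm V + 1)"
    have nBV: "norm B * norm V \<ge> 0" by simp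
    have e1: "e1 > 0" using \<delta> nBV by (simp add: e1_def add_nonneg_pos)
    define W where "W = lyapI M0 (Hl A B Q R Ustar V)"
    define K where "K = n * norm (transpose V ** R ** V) * S + n * (2 * norm W * (norm B * norm V)) * S"
    have K: "K \<ge> 0" using n0 S0 by (simp add: K_def)
    have small: "norm (B ** (c *\<^sub>R V)) \<le> \<delta>" if c: "\<bar>c\<bar> \<le> e1" for c
    proof -
      have "norm (B ** (c *\<^sub>R V)) \<le> \<bar>c\<bar> * (norm B * norm V)" using smallE[of c V] by (simp add: mult.assoc)
      also have "\<dots> \<le> e1 * (norm B * norm V + 1)" using c e1 by (intro mult_mono) auto
      also have "\<dots> = \<delta>"
      proof -
        have "norm B * norm V + 1 > 0" using nBV by linarith
        then show ?thesis by (simp add: e1_def)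
      qed
      finally show ?thesis .
    qed
    show ?thesis
    proof (rule first_order_real[OF e1 K])
      fix c :: real assume c: "\<bar>c\<bar> \<le> e1"
      define E where "E = B ** (c *\<^sub>R V)"
      have nE: "norm E \<le> \<delta>" unfolding E_def by (rule small[OF c])
      have d1: "decays (M0 + E)" by (rule decE[OF nE])
      have eqM: "A + B ** (Ustar + c *\<^sub>R V) = M0 + E" by (simp add: M0_def E_def matrix_add_ldistrib add.assoc)
      have "spectral_abscissa (A + B ** (Ustar + c *\<^sub>R V)) < 0"
        unfolding eqM by (rule decays_abscissa[OF d1])
      then have opt: "0 \<le> lqr_cost A B Q R (Ustar + c *\<^sub>R V) - lqr_cost A B Q R Ustar"
        using assms(4) by force
      define t1 where "t1 = trace ((transpose V ** R ** V) ** Sig (M0 + E))"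
      define h0 where "h0 = trace (Hl A B Q R Ustar V ** Sig M0)"
      define r where "r = trace ((W ** E + transpose E ** W) ** Sig (M0 + E))"
      have exp: "lqr_cost A B Q R (Ustar + c *\<^sub>R V) - lqr_cost A B Q R Ustar = c^2 * t1 + c * h0 + c * r"
        using expansion[of A B Ustar c V Q R] dec0 d1
        by (simp add: t1_def h0_def r_def W_def M0_def E_def)
      have t1b: "\<bar>t1\<bar> \<le> n * norm (transpose V ** R ** V) * S"
      proof -
        have "\<bar>t1\<bar> \<le> n * (norm (transpose V ** R ** V) * norm (Sig (M0 + E)))"
          unfolding t1_def n_def by (rule trace_mult_le)
        also have "\<dots> \<le> n * (norm (transpose V ** R ** V) * S)"
          using Sb[OF nE] n0 by (intro mult_left_mono) auto
        finally show ?thesis by (simp add: mult.assoc)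
      qed
      have rb: "\<bar>r\<bar> \<le> \<bar>c\<bar> * (n * (2 * norm W * (norm B * norm V)) * S)"
      proof -
        have "\<bar>r\<bar> \<le> n * (2 * norm W * norm E) * norm (Sig (M0 + E))"
          unfolding r_def n_def by (rule pert_term_bound)
        also have "\<dots> \<le> n * (2 * norm W * (\<bar>c\<bar> * (norm B * norm V))) * S"
        proof (intro mult_mono mult_left_mono)
          show "norm E \<le> \<bar>c\<bar> * (norm B * norm V)" using smallE[of c V] by (simp add: E_def mult.assoc)
          show "norm (Sig (M0 + E)) \<le> S" by (rule Sb[OF nE])
        qed (use n0 S0 in auto)
        finally show ?thesis by (simp add: mult_ac)
      qed
      have "c^2 * t1 + c * r \<le> c^2 * K"
      proof -
        have "c^2 * t1 \<le> c^2 * (n * norm (transpose V ** R ** V) * S)"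
          using t1b by (intro mult_left_mono) auto
        moreover have "c * r \<le> c^2 * (n * (2 * norm W * (norm B * norm V)) * S)"
        proof -
          have "c * r \<le> \<bar>c\<bar> * \<bar>r\<bar>" by (simp add: abs_mult[symmetric])
          also have "\<dots> \<le> \<bar>c\<bar> * (\<bar>c\<bar> * (n * (2 * norm W * (norm B * norm V)) * S))"
            using rb by (intro mult_left_mono) auto
          finally show ?thesis by (simp add: power2_eq_square mult.assoc)
        qed
        ultimately show ?thesis by (simp add: K_def algebra_simps)
      qed
      then show "0 \<le> c * h0 + c^2 * K" using opt exp by linarith
    qed
  qed
  define sd where "sd = sqrt (real CARD('d))"
  have sd0: "sd \<ge> 0" by (simp add: sd_def)
  define \<epsilon>0 where "\<epsilon>0 = \<delta> / (norm B * sd + 1)"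
  have nBsd: "norm B * sd \<ge> 0" using sd0 by simp
  have e0: "\<epsilon>0 > 0" using \<delta> nBsd by (simp add: \<epsilon>0_def add_nonneg_pos)
  define P0 where "P0 = lyapI M0 (Q + transpose Ustar ** R ** Ustar)"
  define KH where "KH = sd * (2 * (norm R * norm Ustar) + 2 * (norm P0 * norm B))"
  define Kw where "Kw = C^2 * KH / (2*a)"
  define C1 where "C1 = n * (sd * sd * norm R) * S + n * (2 * Kw * (norm B * sd)) * S"
  have main: "\<forall>dU :: real^'d^'p. spec_norm dU = 1 \<longrightarrow>
           (\<forall>\<epsilon> \<in> {0..\<epsilon>0}. lqr_cost A B Q R (Ustar + \<epsilon> *\<^sub>R dU) - lqr_cost A B Q R Ustar \<le> C1 * \<epsilon>^2)"
  proof (intro allI impI ballI)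
    fix dU :: "real^'d^'p" and \<epsilon> :: real
    assume dU: "spec_norm dU = 1" and eps: "\<epsilon> \<in> {0..\<epsilon>0}"
    have ep: "0 \<le> \<epsilon>" "\<epsilon> \<le> \<epsilon>0" using eps by auto
    have ndU: "norm dU \<le> sd" using frob_le_spec[of dU] dU by (simp add: sd_def)
    define E where "E = B ** (\<epsilon> *\<^sub>R dU)"
    have nE: "norm E \<le> \<epsilon> * (norm B * sd)"
    proof -
      have "norm E \<le> \<bar>\<epsilon>\<bar> * norm B * norm dU" unfolding E_def by (rule smallE)
      also have "\<dots> \<le> \<epsilon> * norm B * sd" using ep ndU by (simp add: mult_left_mono)
      finally show ?thesis by (simp add: mult.assoc)
    qed
    have nEd: "norm E \<le> \<delta>"
    proof -
      have "\<epsilon> * (norm B * sd) \<le> \<epsilon>0 * (norm B * sd + 1)"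
        using ep nBsd e0 by (intro mult_mono) auto
      also have "\<dots> = \<delta>"
      proof -
        have "norm B * sd + 1 > 0" using nBsd by linarith
        then show ?thesis by (simp add: \<epsilon>0_def)
      qed
      finally show ?thesis using nE by simp
    qed
    have d1: "decays (M0 + E)" by (rule decE[OF nEd])
    define W where "W = lyapI M0 (Hl A B Q R Ustar dU)"
    define t1 where "t1 = trace ((transpose dU ** R ** dU) ** Sig (M0 + E))"
    define r where "r = trace ((W ** E + transpose E ** W) ** Sig (M0 + E))"
    have exp: "lqr_cost A B Q R (Ustar + \<epsilon> *\<^sub>R dU) - lqr_cost A B Q R Ustar = \<epsilon>^2 * t1 + \<epsilon> * 0 + \<epsilon> * r"
      using expansion[of A B Ustar \<epsilon> dU Q R] dec0 d1 FO[of dU]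
      by (simp add: t1_def r_def W_def M0_def E_def)
    have t1b: "t1 \<le> n * (sd * sd * norm R) * S"
    proof -
      have "\<bar>t1\<bar> \<le> n * (norm (transpose dU ** R ** dU) * norm (Sig (M0 + E)))"
        unfolding t1_def n_def by (rule trace_mult_le)
      also have "\<dots> \<le> n * ((sd * norm R * sd) * S)"
      proof (intro mult_left_mono mult_mono n0)
        show "norm (transpose dU ** R ** dU) \<le> sd * norm R * sd"
          using norm_tmt[of dU R dU] ndU
          by (smt (verit) mult_mono mult_nonneg_nonneg norm_ge_zero)
        show "norm (Sig (M0 + E)) \<le> S" by (rule Sb[OF nEd])
      qed (use sd0 in auto)
      finally show ?thesis by (simp add: mult_ac)
    qed
    have nH: "norm (Hl A B Q R Ustar dU) \<le> KH"
    proof -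
      have P0eq: "lyapI (A + B ** Ustar) (Q + transpose Ustar ** R ** Ustar) = P0" by (simp add: P0_def M0_def)
      have "norm (Hl A B Q R Ustar dU) \<le> norm (transpose dU ** R ** Ustar) + norm (transpose Ustar ** R ** dU)
            + norm (P0 ** (B ** dU)) + norm (transpose (B ** dU) ** P0)"
        unfolding Hl_def P0eq by (intro order.trans[OF norm_triangle_ineq] add_mono order.refl)
      also have "\<dots> \<le> sd * norm R * norm Ustar + norm Ustar * norm R * sd + norm P0 * (norm B * sd) + (norm B * sd) * norm P0"
      proof (intro add_mono)
        show "norm (transpose dU ** R ** Ustar) \<le> sd * norm R * norm Ustar"
          using norm_tmt[of dU R Ustar] ndU by (smt (verit) mult_right_mono norm_ge_zero mult_nonneg_nonneg)
        show "norm (transpose Ustar ** R ** dU) \<le> norm Ustar * norm R * sd"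
          using norm_tmt[of Ustar R dU] ndU by (smt (verit) mult_left_mono norm_ge_zero mult_nonneg_nonneg)
        have nBdU: "norm (B ** dU) \<le> norm B * sd"
          using norm_mult_le[of B dU] ndU by (smt (verit) mult_left_mono norm_ge_zero)
        show "norm (P0 ** (B ** dU)) \<le> norm P0 * (norm B * sd)"
          using norm_mult_le[of P0 "B ** dU"] nBdU by (smt (verit) mult_left_mono norm_ge_zero)
        show "norm (transpose (B ** dU) ** P0) \<le> (norm B * sd) * norm P0"
          using norm_mult_le[of "transpose (B ** dU)" P0] nBdU
          by (simp add: norm_transpose) (smt (verit) mult_right_mono norm_ge_zero)
      qed
      also have "\<dots> = KH" by (simp add: KH_def algebra_simps)
      finally show ?thesis .
    qed
    have nW: "norm W \<le> Kw"
    proof -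
      have "norm W \<le> C^2 * norm (Hl A B Q R Ustar dU) / (2*a)"
        unfolding W_def by (rule lyapI_norm[OF a ud0])
      also have "\<dots> \<le> C^2 * KH / (2*a)" using nH a by (intro divide_right_mono mult_left_mono) auto
      finally show ?thesis by (simp add: Kw_def)
    qed
    have rb: "r \<le> \<epsilon> * (n * (2 * Kw * (norm B * sd)) * S)"
    proof -
      have "\<bar>r\<bar> \<le> n * (2 * norm W * norm E) * norm (Sig (M0 + E))"
        unfolding r_def n_def by (rule pert_term_bound)
      also have "\<dots> \<le> n * (2 * Kw * (\<epsilon> * (norm B * sd))) * S"
      proof (intro mult_mono mult_left_mono)
        show "norm W \<le> Kw" by (rule nW)
        show "norm E \<le> \<epsilon> * (norm B * sd)" by (rule nE)
        show "norm (Sig (M0 + E)) \<le> S" by (rule Sb[OF nEd])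
      qed (use n0 S0 ep nBsd order_trans[OF norm_ge_zero nW] in auto)
      finally show ?thesis by (simp add: mult_ac)
    qed
    have "\<epsilon>^2 * t1 + \<epsilon> * 0 + \<epsilon> * r \<le> \<epsilon>^2 * (n * (sd * sd * norm R) * S) + \<epsilon> * (\<epsilon> * (n * (2 * Kw * (norm B * sd)) * S))"
    proof -
      have a1: "\<epsilon>^2 * t1 \<le> \<epsilon>^2 * (n * (sd * sd * norm R) * S)"
        using t1b by (intro mult_left_mono) auto
      have a2: "\<epsilon> * r \<le> \<epsilon> * (\<epsilon> * (n * (2 * Kw * (norm B * sd)) * S))"
        using rb ep by (intro mult_left_mono) auto
      show ?thesis using a1 a2 by simp
    qed
    also have "\<dots> = C1 * \<epsilon>^2" by (simp add: C1_def power2_eq_square algebra_simps)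
    finally show "lqr_cost A B Q R (Ustar + \<epsilon> *\<^sub>R dU) - lqr_cost A B Q R Ustar \<le> C1 * \<epsilon>^2"
      using exp by simp
  qed
  show ?thesis using e0 main by blast
qed


end
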